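(* Suppose Assumptions 1 and 2 hold, $m_c=1$ for all $c\in\mathcal C$, and $\bm\gamma=(\gamma(c))_{c\in\mathcal C}\in(0,1)^{\mathcal C}$. Consider the problem $$\Gamma^*_{\bm\gamma}=\max_{\bm\alpha,\bm\beta\ge0}\ \min_{c\in\mathcal C}\alpha(c)\min_{d\in\mathcal U_c}G_d(\gamma(c),\beta(c,d))$$ subject to $\sum_c\alpha(c)=1$ and $\sum_{d\in\mathcal U_c}\beta(c,d)=1-\gamma(c)$ for all $c$. (i) A feasible $(\bm\alpha,\bm\beta)$ is optimal for this problem if there exists $z>0$ with $$\alpha(c)G_d(\gamma(c),\beta(c,d))=z\quad\text{for all }c\in\mathcal C,\ d\in\mathcal U_c. \qquad (\ast)$$ (ii) There exists an optimal solution of this problem satisfying $(\ast)$. (iii) Suppose $\gamma(c)=\beta^*(c,d^*(c))$ for all $c$, for some optimal solution $(\bm\alpha^*,\bm\beta^* )$ of the unconstrained problem $$\max_{\bm\alpha,\bm\beta\ge0}\min_c\alpha(c)\min_{d\in\mathcal U_c}G_d(\beta(c,d^*(c)),\beta(c,d))$$ subject to $\sum_c\alpha(c)=1$ and $\sum_{d\in\mathcal D_c}\beta(c,d)=1$. Then $(\ast)$ is also necessary for optimality.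
   Context: Setting. - $\mathcal C$ is a finite set of contexts and $\mathcal D=\bigsqcup_c\mathcal D_c$ a finite set of designs. - Designs have true parameters $\theta^*_d=(\mu^*_d,\eta^*_d)\in\Theta=M\times H$, with $M\subseteq\mathbb R$, $H\subseteq\mathbb R^k$, and distinct $\mu^*_d$. - $d^*(c)=\arg\max_{d\in\mathcal D_c}\mu^*_d$ and $\mathcal U_c=\mathcal D_c\setminus\{d^*(c)\}$. Assumption 1. - $\Theta$ is compact with boundary of Lebesgue measure zero. - $p(y\mid\theta)$ is continuous in $\theta$. - The family is identifiable. - Log-likelihood ratios form a universal Glivenko–Cantelli class. Assumption 2. The KL divergence $D(\theta^*\Vert\theta)$ is finite and continuously differentiable in $\theta$. Rate function. For $d\in\mathcal U_c$ and $x,y\ge0$, $$G_d(x,y)=\inf\{y\,D(\theta^*_d\Vert\theta_d)+x\,D(\theta^*_{d^*(c)}\Vert\theta_{d^*(c)}):\theta_d,\theta_{d^*(c)}\in\Theta,\ \mu_d\ge\mu_{d^*(c)}\}.$$ *)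

theory Defs
  imports "HOL-Probability.Probability"
begin

definition KL :: "'y measure \<Rightarrow> ('p \<Rightarrow> 'y \<Rightarrow> real) \<Rightarrow> 'p \<Rightarrow> 'p \<Rightarrow> real" where
  "KL \<nu> p a b = (\<integral>y. p a y * ln (p a y / p b y) \<partial>\<nu>)"

definition universal_GC :: "'y measure \<Rightarrow> ('y \<Rightarrow> real) set \<Rightarrow> bool" where
  "universal_GC M F \<longleftrightarrow>
     (\<forall>Q. prob_space Q \<and> sets Q = sets M \<and> (\<forall>f\<in>F. integrable Q f) \<longrightarrow>
        (AE \<omega> in PiM UNIV (\<lambda>_::nat. Q).
           \<forall>e>0. eventually (\<lambda>n. \<forall>f\<in>F.
              \<bar>(\<Sum>i<n. f (\<omega> i)) / real n - (\<integral>y. f y \<partial>Q)\<bar> \<le> e) sequentially))"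

text \<open>Best design of a context (unique when the means are distinct).\<close>
definition best :: "('d \<Rightarrow> real) \<Rightarrow> 'd set \<Rightarrow> 'd" where
  "best mu Dc = (ARG_MAX mu d. d \<in> Dc)"

text \<open>Rate function G_d(x,y) for design d whose context has best design dst.
  Parameters are pairs (mu, eta); fst is the mean component.\<close>
definition rateG ::
  "(real \<times> 'h \<Rightarrow> real \<times> 'h \<Rightarrow> real) \<Rightarrow> (real \<times> 'h) set \<Rightarrow> ('d \<Rightarrow> real \<times> 'h) \<Rightarrow> 'd \<Rightarrow> 'd
     \<Rightarrow> real \<Rightarrow> real \<Rightarrow> real"
  where
  "rateG Dv \<Theta> \<theta>s d dst x y =
     Inf {y * Dv (\<theta>s d) t1 + x * Dv (\<theta>s dst) t2 | t1 t2.
            t1 \<in> \<Theta> \<and> t2 \<in> \<Theta> \<and> fst t1 \<ge> fst t2}"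

text \<open>R c d x y plays the role of G_d(x,y) for d in context c; U c is the set of
  non-best designs of context c.\<close>

definition objG :: "'c set \<Rightarrow> ('c \<Rightarrow> 'd set) \<Rightarrow> ('c \<Rightarrow> 'd \<Rightarrow> real \<Rightarrow> real \<Rightarrow> real)
     \<Rightarrow> ('c \<Rightarrow> real) \<Rightarrow> ('c \<Rightarrow> real) \<Rightarrow> ('c \<Rightarrow> 'd \<Rightarrow> real) \<Rightarrow> real" where
  "objG C U R \<gamma> \<alpha> \<beta> = Min ((\<lambda>c. \<alpha> c * Min ((\<lambda>d. R c d (\<gamma> c) (\<beta> c d)) ` U c)) ` C)"

definition feasG :: "'c set \<Rightarrow> ('c \<Rightarrow> 'd set) \<Rightarrow> ('c \<Rightarrow> real)
     \<Rightarrow> ('c \<Rightarrow> real) \<Rightarrow> ('c \<Rightarrow> 'd \<Rightarrow> real) \<Rightarrow> bool" where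
  "feasG C U \<gamma> \<alpha> \<beta> \<longleftrightarrow>
     (\<forall>c\<in>C. 0 \<le> \<alpha> c) \<and> sum \<alpha> C = 1 \<and>
     (\<forall>c\<in>C. (\<forall>d\<in>U c. 0 \<le> \<beta> c d) \<and> sum (\<beta> c) (U c) = 1 - \<gamma> c)"

definition optG where
  "optG C U R \<gamma> \<alpha> \<beta> \<longleftrightarrow> feasG C U \<gamma> \<alpha> \<beta> \<and>
     (\<forall>\<alpha>' \<beta>'. feasG C U \<gamma> \<alpha>' \<beta>' \<longrightarrow> objG C U R \<gamma> \<alpha>' \<beta>' \<le> objG C U R \<gamma> \<alpha> \<beta>)"

definition objU :: "'c set \<Rightarrow> ('c \<Rightarrow> 'd set) \<Rightarrow> ('c \<Rightarrow> 'd) \<Rightarrow>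
     ('c \<Rightarrow> 'd \<Rightarrow> real \<Rightarrow> real \<Rightarrow> real) \<Rightarrow> ('c \<Rightarrow> real) \<Rightarrow> ('c \<Rightarrow> 'd \<Rightarrow> real) \<Rightarrow> real" where
  "objU C U dst R \<alpha> \<beta> = Min ((\<lambda>c. \<alpha> c * Min ((\<lambda>d. R c d (\<beta> c (dst c)) (\<beta> c d)) ` U c)) ` C)"

definition feasU :: "'c set \<Rightarrow> ('c \<Rightarrow> 'd set) \<Rightarrow> ('c \<Rightarrow> real) \<Rightarrow> ('c \<Rightarrow> 'd \<Rightarrow> real) \<Rightarrow> bool" where
  "feasU C Dc \<alpha> \<beta> \<longleftrightarrow>
     (\<forall>c\<in>C. 0 \<le> \<alpha> c) \<and> sum \<alpha> C = 1 \<and>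
     (\<forall>c\<in>C. (\<forall>d\<in>Dc c. 0 \<le> \<beta> c d) \<and> sum (\<beta> c) (Dc c) = 1)"

definition optU where
  "optU C Dc U dst R \<alpha> \<beta> \<longleftrightarrow> feasU C Dc \<alpha> \<beta> \<and>
     (\<forall>\<alpha>' \<beta>'. feasU C Dc \<alpha>' \<beta>' \<longrightarrow> objU C U dst R \<alpha>' \<beta>' \<le> objU C U dst R \<alpha> \<beta>)"

end

theory Submission
  imports Defs
begin


lemma objG_le:
  assumes "finite C" "\<forall>c\<in>C. finite (U c)" "c \<in> C" "d \<in> U c" "0 \<le> \<alpha> c"
  shows "objG C U R \<gamma> \<alpha> \<beta> \<le> \<alpha> c * R c d (\<gamma> c) (\<beta> c d)"
proof -
  have "objG C U R \<gamma> \<alpha> \<beta> \<le> \<alpha> c * Min ((\<lambda>d. R c d (\<gamma> c) (\<beta> c d)) ` U c)"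
    unfolding objG_def using assms by (intro Min_le) auto
  also have "\<dots> \<le> \<alpha> c * R c d (\<gamma> c) (\<beta> c d)"
    using assms by (intro mult_left_mono Min_le) auto
  finally show ?thesis .
qed

lemma objU_le:
  assumes "finite C" "\<forall>c\<in>C. finite (U c)" "c \<in> C" "d \<in> U c" "0 \<le> \<alpha> c"
  shows "objU C U dst R \<alpha> \<beta> \<le> \<alpha> c * R c d (\<beta> c (dst c)) (\<beta> c d)"
proof -
  have "objU C U dst R \<alpha> \<beta> \<le> \<alpha> c * Min ((\<lambda>d. R c d (\<beta> c (dst c)) (\<beta> c d)) ` U c)"
    unfolding objU_def using assms by (intro Min_le) auto
  also have "\<dots> \<le> \<alpha> c * R c d (\<beta> c (dst c)) (\<beta> c d)"
    using assms by (intro mult_left_mono Min_le) auto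
  finally show ?thesis .
qed

lemma objU_gt:
  assumes "finite C" "C \<noteq> {}" "\<forall>c\<in>C. finite (U c) \<and> U c \<noteq> {}"
    and "\<forall>c\<in>C. \<forall>d\<in>U c. V < \<alpha> c * R c d (\<beta> c (dst c)) (\<beta> c d)"
  shows "V < objU C U dst R \<alpha> \<beta>"
proof -
  have "V < \<alpha> c * Min ((\<lambda>d. R c d (\<beta> c (dst c)) (\<beta> c d)) ` U c)" if c: "c \<in> C" for c
  proof -
    have "Min ((\<lambda>d. R c d (\<beta> c (dst c)) (\<beta> c d)) ` U c) \<in> (\<lambda>d. R c d (\<beta> c (dst c)) (\<beta> c d)) ` U c"
      using assms c by (intro Min_in) auto
    then obtain d where "d \<in> U c" "Min ((\<lambda>d. R c d (\<beta> c (dst c)) (\<beta> c d)) ` U c) = R c d (\<beta> c (dst c)) (\<beta> c d)"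
      by auto
    then show ?thesis using assms c by auto
  qed
  then have "\<forall>a\<in>(\<lambda>c. \<alpha> c * Min ((\<lambda>d. R c d (\<beta> c (dst c)) (\<beta> c d)) ` U c)) ` C. V < a"
    by blast
  moreover have fin: "finite ((\<lambda>c. \<alpha> c * Min ((\<lambda>d. R c d (\<beta> c (dst c)) (\<beta> c d)) ` U c)) ` C)"
    using assms(1) by simp
  moreover have ne: "(\<lambda>c. \<alpha> c * Min ((\<lambda>d. R c d (\<beta> c (dst c)) (\<beta> c d)) ` U c)) ` C \<noteq> {}"
    using assms(2) by simp
  ultimately show ?thesis unfolding objU_def using Min_gr_iff[OF fin ne] by blast
qed

lemma part_i:
  assumes finC: "finite C" "C \<noteq> {}" and finU: "\<forall>c\<in>C. finite (U c) \<and> U c \<noteq> {}"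
    and mono: "\<forall>c\<in>C. \<forall>d\<in>U c. \<forall>y y'. 0 \<le> y \<longrightarrow> y \<le> y' \<longrightarrow> R c d (\<gamma> c) y \<le> R c d (\<gamma> c) y'"
    and feas: "feasG C U \<gamma> \<alpha> \<beta>" and zpos: "0 < z"
    and eq: "\<forall>c\<in>C. \<forall>d\<in>U c. \<alpha> c * R c d (\<gamma> c) (\<beta> c d) = z"
  shows "optG C U R \<gamma> \<alpha> \<beta>"
proof -
  have ann: "0 \<le> \<alpha> c" if "c \<in> C" for c using feas that unfolding feasG_def by blast
  have apos: "0 < \<alpha> c" if c: "c \<in> C" for c
  proof -
    obtain d where "d \<in> U c" using finU c ex_in_conv by metis
    then have "\<alpha> c * R c d (\<gamma> c) (\<beta> c d) = z" using eq c by blast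
    then have "\<alpha> c \<noteq> 0" using zpos by auto
    then show ?thesis using ann[OF c] by linarith
  qed
  have img: "(\<lambda>d. R c d (\<gamma> c) (\<beta> c d)) ` U c = {z / \<alpha> c}" if c: "c \<in> C" for c
  proof -
    have "R c d (\<gamma> c) (\<beta> c d) = z / \<alpha> c" if "d \<in> U c" for d
    proof -
      have "\<alpha> c * R c d (\<gamma> c) (\<beta> c d) = z" using eq c that by blast
      then show ?thesis using apos[OF c] by (simp add: field_simps)
    qed
    then have "(\<lambda>d. R c d (\<gamma> c) (\<beta> c d)) ` U c = (\<lambda>d. z / \<alpha> c) ` U c" by (rule image_cong[OF refl])
    also have "\<dots> = {z / \<alpha> c}"
    proof -
      have "U c \<noteq> {}" using finU c by simp
      then show ?thesis by (simp add: image_constant_conv)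
    qed
    finally show ?thesis .
  qed
  have "(\<lambda>c. \<alpha> c * Min ((\<lambda>d. R c d (\<gamma> c) (\<beta> c d)) ` U c)) ` C = (\<lambda>c. z) ` C"
  proof (rule image_cong[OF refl])
    fix c assume c: "c \<in> C"
    show "\<alpha> c * Min ((\<lambda>d. R c d (\<gamma> c) (\<beta> c d)) ` U c) = z" unfolding img[OF c] using apos[OF c] by simp
  qed
  also have "\<dots> = {z}" using finC by (simp add: image_constant_conv)
  finally have obj: "objG C U R \<gamma> \<alpha> \<beta> = z" unfolding objG_def by simp
  show ?thesis unfolding optG_def
  proof (intro conjI allI impI)
    show "feasG C U \<gamma> \<alpha> \<beta>" by fact
    fix \<alpha>' \<beta>' assume feas': "feasG C U \<gamma> \<alpha>' \<beta>'"
    have ann': "0 \<le> \<alpha>' c" if "c \<in> C" for c using feas' that unfolding feasG_def by blast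
    have bnn': "0 \<le> \<beta>' c d" if "c \<in> C" "d \<in> U c" for c d using feas' that unfolding feasG_def by blast
    show "objG C U R \<gamma> \<alpha>' \<beta>' \<le> objG C U R \<gamma> \<alpha> \<beta>"
    proof (rule ccontr)
      assume "\<not> ?thesis"
      then have gt: "z < objG C U R \<gamma> \<alpha>' \<beta>'" using obj by simp
      have lt: "z < \<alpha>' c * R c d (\<gamma> c) (\<beta>' c d)" if "c \<in> C" "d \<in> U c" for c d
      proof -
        have "objG C U R \<gamma> \<alpha>' \<beta>' \<le> \<alpha>' c * R c d (\<gamma> c) (\<beta>' c d)"
          using finC finU that ann' by (intro objG_le) auto
        then show ?thesis using gt by linarith
      qed
      have "\<exists>c\<in>C. \<alpha>' c \<le> \<alpha> c"
      proof (rule ccontr)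
        assume "\<not> ?thesis"
        then have "\<forall>c\<in>C. \<alpha> c < \<alpha>' c" by (meson not_le)
        then have "sum \<alpha> C < sum \<alpha>' C" using finC by (intro sum_strict_mono) auto
        then show False using feas feas' unfolding feasG_def by simp
      qed
      then obtain c where c: "c \<in> C" "\<alpha>' c \<le> \<alpha> c" by blast
      obtain d0 where d0: "d0 \<in> U c" using finU c ex_in_conv by metis
      have a'pos: "0 < \<alpha>' c"
      proof (rule ccontr)
        assume "\<not> 0 < \<alpha>' c"
        then have "\<alpha>' c = 0" using ann'[OF c(1)] by linarith
        then show False using lt[OF c(1) d0] zpos by simp
      qed
      have "\<beta> c d < \<beta>' c d" if d: "d \<in> U c" for d
      proof (rule ccontr)
        assume "\<not> ?thesis"
        then have "\<beta>' c d \<le> \<beta> c d" by linarith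
        then have "R c d (\<gamma> c) (\<beta>' c d) \<le> R c d (\<gamma> c) (\<beta> c d)"
          using mono c(1) d bnn'[OF c(1) d] by blast
        moreover have "z / \<alpha>' c < R c d (\<gamma> c) (\<beta>' c d)"
          using lt[OF c(1) d] a'pos by (simp add: field_simps)
        moreover have "z / \<alpha> c \<le> z / \<alpha>' c"
          using c a'pos zpos by (intro divide_left_mono) auto
        moreover have "R c d (\<gamma> c) (\<beta> c d) = z / \<alpha> c" using img[OF c(1)] d by auto
        ultimately show False by linarith
      qed
      then have "sum (\<beta> c) (U c) < sum (\<beta>' c) (U c)"
        using finU c by (intro sum_strict_mono) auto
      then show False using feas feas' c unfolding feasG_def by simp
    qed
  qed
qed

lemma part_iii:
  assumes finC: "finite C" "C \<noteq> {}" and finU: "\<forall>c\<in>C. finite (U c) \<and> U c \<noteq> {}"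
    and finD: "\<forall>c\<in>C. finite (Dc c)"
    and Udef: "\<forall>c\<in>C. U c = Dc c - {dst c}"
    and dstin: "\<forall>c\<in>C. dst c \<in> Dc c"
    and gam: "\<forall>c\<in>C. 0 \<le> \<gamma> c"
    and Rzero: "\<forall>c\<in>C. \<forall>d\<in>U c. \<forall>x. 0 \<le> x \<longrightarrow> R c d x 0 = 0"
    and Rmono: "\<forall>c\<in>C. \<forall>d\<in>U c. \<forall>x x' y y'. 0 \<le> x \<longrightarrow> x \<le> x' \<longrightarrow> 0 \<le> y \<longrightarrow> y \<le> y'
                  \<longrightarrow> R c d x y \<le> R c d x' y'"
    and Rsup: "\<forall>c\<in>C. \<forall>d\<in>U c. \<forall>x1 y1 x2 y2. 0 \<le> x1 \<longrightarrow> 0 \<le> y1 \<longrightarrow> 0 \<le> x2 \<longrightarrow> 0 \<le> y2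
                  \<longrightarrow> R c d x1 y1 + R c d x2 y2 \<le> R c d (x1 + x2) (y1 + y2)"
    and Rhom: "\<forall>c\<in>C. \<forall>d\<in>U c. \<forall>k x y. 0 < k \<longrightarrow> 0 \<le> x \<longrightarrow> 0 \<le> y
                  \<longrightarrow> R c d (k * x) (k * y) = k * R c d x y"
    and Rpos: "\<forall>c\<in>C. \<forall>d\<in>U c. \<forall>x y. 0 < x \<longrightarrow> 0 < y \<longrightarrow> 0 < R c d x y"
    and Rlip: "\<forall>c\<in>C. \<forall>d\<in>U c. \<exists>L\<ge>0. \<forall>x y y'. 0 \<le> x \<longrightarrow> 0 \<le> y \<longrightarrow> y \<le> y'
                  \<longrightarrow> R c d x y' \<le> R c d x y + L * (y' - y)"
    and optu: "optU C Dc U dst R \<alpha>s \<beta>s" and gs: "\<forall>c\<in>C. \<gamma> c = \<beta>s c (dst c)"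
    and opt: "optG C U R \<gamma> \<alpha> \<beta>"
    and Vpos: "0 < objG C U R \<gamma> \<alpha> \<beta>"
  shows "\<forall>c\<in>C. \<forall>d\<in>U c. \<alpha> c * R c d (\<gamma> c) (\<beta> c d) = objG C U R \<gamma> \<alpha> \<beta>"
proof -
  define V where "V = objG C U R \<gamma> \<alpha> \<beta>"
  have feas: "feasG C U \<gamma> \<alpha> \<beta>" using opt unfolding optG_def by auto
  have feasu: "feasU C Dc \<alpha>s \<beta>s" using optu unfolding optU_def by auto
  have dstU: "dst c \<notin> U c" if "c \<in> C" for c using Udef that by auto
  have "feasG C U \<gamma> \<alpha>s \<beta>s"
  proof -
    have "sum (\<beta>s c) (U c) = 1 - \<gamma> c" if c: "c \<in> C" for c
    proof -
      have "sum (\<beta>s c) (Dc c) = \<beta>s c (dst c) + sum (\<beta>s c) (Dc c - {dst c})"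
        using finD dstin c by (intro sum.remove) auto
      then show ?thesis using feasu c gs Udef unfolding feasU_def by auto
    qed
    then show ?thesis using feasu Udef unfolding feasU_def feasG_def by auto
  qed
  then have le1: "objG C U R \<gamma> \<alpha>s \<beta>s \<le> V" using opt unfolding optG_def V_def by auto
  have "objG C U R \<gamma> \<alpha>s \<beta>s = objU C U dst R \<alpha>s \<beta>s"
    unfolding objG_def objU_def
    by (intro arg_cong[where f=Min] image_cong refl) (simp add: gs)
  then have usV: "objU C U dst R \<alpha>s \<beta>s \<le> V" using le1 by simp
  define \<beta>' where "\<beta>' c e = (if e = dst c then \<gamma> c else \<beta> c e)" for c e
  have sumb': "sum (\<beta>' c) (Dc c) = 1" if c: "c \<in> C" for c
  proof -
    have "sum (\<beta>' c) (Dc c) = \<beta>' c (dst c) + sum (\<beta>' c) (Dc c - {dst c})"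
      using finD dstin c by (intro sum.remove) auto
    also have "sum (\<beta>' c) (Dc c - {dst c}) = sum (\<beta> c) (U c)"
      using Udef c unfolding \<beta>'_def by (intro sum.cong) auto
    finally show ?thesis using feas c unfolding feasG_def \<beta>'_def by auto
  qed
  have b'nn: "0 \<le> \<beta>' c e" if "c \<in> C" "e \<in> Dc c" for c e
    using that feas gam Udef unfolding feasG_def \<beta>'_def by auto
  have anng: "0 \<le> \<alpha> c" if "c \<in> C" for c using feas that unfolding feasG_def by auto
  have bnn: "0 \<le> \<beta> c d" if "c \<in> C" "d \<in> U c" for c d using feas that unfolding feasG_def by auto
  have geV: "V \<le> \<alpha> c * R c d (\<gamma> c) (\<beta> c d)" if "c \<in> C" "d \<in> U c" for c d
    unfolding V_def using that finC finU anng by (intro objG_le) auto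
  have apos: "0 < \<alpha> c" if c: "c \<in> C" for c
  proof -
    obtain d where "d \<in> U c" using finU c ex_in_conv by metis
    then have "V \<le> \<alpha> c * R c d (\<gamma> c) (\<beta> c d)" using geV c by auto
    then have "\<alpha> c \<noteq> 0" using Vpos V_def by auto
    then show ?thesis using anng c by force
  qed
  show ?thesis unfolding V_def[symmetric]
  proof (rule ccontr)
    assume "\<not> (\<forall>c\<in>C. \<forall>d\<in>U c. \<alpha> c * R c d (\<gamma> c) (\<beta> c d) = V)"
    then obtain c0 d0 where c0: "c0 \<in> C" and d0: "d0 \<in> U c0"
      and ne0: "\<alpha> c0 * R c0 d0 (\<gamma> c0) (\<beta> c0 d0) \<noteq> V" by blast
    have gt0: "V < \<alpha> c0 * R c0 d0 (\<gamma> c0) (\<beta> c0 d0)" using geV[OF c0 d0] ne0 by linarith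
    define w where "w c e = \<alpha> c * \<beta>' c e" for c e
    have wnn: "0 \<le> w c e" if "c \<in> C" "e \<in> Dc c" for c e
      unfolding w_def using that anng b'nn by auto
    have d0D: "d0 \<in> Dc c0" and d0ne: "d0 \<noteq> dst c0" using Udef c0 d0 by auto
    define x0 where "x0 = \<alpha> c0 * \<gamma> c0"
    define y0 where "y0 = \<alpha> c0 * \<beta> c0 d0"
    have wx0: "w c0 (dst c0) = x0" unfolding w_def x0_def \<beta>'_def by simp
    have wy0: "w c0 d0 = y0" unfolding w_def y0_def \<beta>'_def using d0ne by simp
    have Rw: "R c d (w c (dst c)) (w c d) = \<alpha> c * R c d (\<gamma> c) (\<beta> c d)" if "c \<in> C" "d \<in> U c" for c d
    proof -
      have "d \<noteq> dst c" using that dstU by auto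
      then have "w c (dst c) = \<alpha> c * \<gamma> c" "w c d = \<alpha> c * \<beta> c d" unfolding w_def \<beta>'_def by auto
      then show ?thesis using Rhom[rule_format, OF that(1) that(2) apos[OF that(1)] gam[rule_format, OF that(1)] bnn[OF that]] by simp
    qed
    have x0nn: "0 \<le> x0" unfolding x0_def using anng gam c0 by auto
    have gt: "V < R c0 d0 x0 y0" using gt0 Rw[OF c0 d0] wx0 wy0 by simp
    have y0pos: "0 < y0"
    proof (cases "\<beta> c0 d0 = 0")
      case True
      then have "y0 = 0" unfolding y0_def by simp
      then show ?thesis using gt Rzero[rule_format, OF c0 d0 x0nn] Vpos unfolding V_def by simp
    next
      case False
      then have "0 < \<beta> c0 d0" using bnn[OF c0 d0] by linarith
      then show ?thesis unfolding y0_def using apos[OF c0] by simp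
    qed
    obtain L where L: "0 \<le> L" "\<forall>x y y'. 0 \<le> x \<longrightarrow> 0 \<le> y \<longrightarrow> y \<le> y' \<longrightarrow> R c0 d0 x y' \<le> R c0 d0 x y + L * (y' - y)"
      using Rlip[rule_format, OF c0 d0] by blast
    define gap where "gap = R c0 d0 x0 y0 - V"
    have gap: "0 < gap" using gt unfolding gap_def by simp
    define \<epsilon> where "\<epsilon> = min y0 (gap / (2 * (L + 1)))"
    have eps: "0 < \<epsilon>" "\<epsilon> \<le> y0" unfolding \<epsilon>_def using y0pos gap L by auto
    have Leps: "L * \<epsilon> < gap"
    proof -
      have "L * \<epsilon> \<le> L * (gap / (2 * (L + 1)))" unfolding \<epsilon>_def using L by (intro mult_left_mono) auto
      also have "\<dots> < gap"
      proof -
        have "0 \<le> L * gap" using L(1) gap by simp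
        then show ?thesis using L(1) gap by (simp add: field_simps; linarith)
      qed
      finally show ?thesis .
    qed
    define N where "N = (\<Sum>c\<in>C. card (Dc c))"
    have "card (Dc c0) \<le> N" unfolding N_def using finC c0 by (intro member_le_sum) auto
    moreover have "0 < card (Dc c0)" using finD dstin c0 by (auto simp: card_gt_0_iff)
    ultimately have Npos: "0 < N" by linarith
    define \<delta> where "\<delta> = \<epsilon> / real N"
    have dpos: "0 < \<delta>" unfolding \<delta>_def using eps Npos by auto
    define w' where "w' c e = w c e - (if c = c0 \<and> e = d0 then \<epsilon> else 0) + \<delta>" for c e
    have w'pos: "\<delta> \<le> w' c e" if "c \<in> C" "e \<in> Dc c" for c e
    proof (cases "c = c0 \<and> e = d0")
      case True then show ?thesis unfolding w'_def using wy0 eps by auto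
    next
      case False then show ?thesis unfolding w'_def using wnn[OF that] by auto
    qed
    define \<alpha>' where "\<alpha>' c = sum (w' c) (Dc c)" for c
    have a'pos: "0 < \<alpha>' c" if c: "c \<in> C" for c
    proof -
      have "Dc c \<noteq> {}" using dstin c by auto
      then show ?thesis unfolding \<alpha>'_def using finD c w'pos[OF c] dpos
        by (intro sum_pos) (auto intro: less_le_trans)
    qed
    define \<beta>'' where "\<beta>'' c e = w' c e / \<alpha>' c" for c e
    have sumw: "sum (w c) (Dc c) = \<alpha> c" if c: "c \<in> C" for c
      unfolding w_def using sumb'[OF c] by (simp add: sum_distrib_left[symmetric])
    have "sum \<alpha>' C = 1"
    proof -
      have "sum \<alpha>' C = (\<Sum>c\<in>C. sum (w c) (Dc c) - (\<Sum>e\<in>Dc c. (if c = c0 \<and> e = d0 then \<epsilon> else 0))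
                         + real (card (Dc c)) * \<delta>)"
        unfolding \<alpha>'_def w'_def by (intro sum.cong refl) (simp add: sum.distrib sum_subtractf)
      also have "\<dots> = (\<Sum>c\<in>C. \<alpha> c - (if c = c0 then \<epsilon> else 0) + real (card (Dc c)) * \<delta>)"
      proof (intro sum.cong refl)
        fix c assume c: "c \<in> C"
        have "(\<Sum>e\<in>Dc c. (if c = c0 \<and> e = d0 then \<epsilon> else 0)) = (if c = c0 then \<epsilon> else 0)"
        proof (cases "c = c0")
          case True then show ?thesis using d0D finD c by (simp add: sum.delta)
        next
          case False then show ?thesis by simp
        qed
        then show "sum (w c) (Dc c) - (\<Sum>e\<in>Dc c. (if c = c0 \<and> e = d0 then \<epsilon> else 0))
                         + real (card (Dc c)) * \<delta> = \<alpha> c - (if c = c0 then \<epsilon> else 0) + real (card (Dc c)) * \<delta>"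
          using sumw[OF c] by simp
      qed
      also have "\<dots> = sum \<alpha> C - \<epsilon> + real N * \<delta>"
        unfolding N_def using finC c0
        by (simp add: sum.distrib sum_subtractf sum.delta sum_distrib_right)
      also have "\<dots> = 1" using feas Npos unfolding feasG_def \<delta>_def by simp
      finally show ?thesis .
    qed
    note sa = this
    have b''nn: "0 \<le> \<beta>'' c d" if c: "c \<in> C" and "d \<in> Dc c" for c d
    proof -
      have "0 \<le> w' c d" using w'pos[OF c \<open>d \<in> Dc c\<close>] dpos by linarith
      then show "0 \<le> \<beta>'' c d" unfolding \<beta>''_def using a'pos[OF c] by simp
    qed
    have sb'': "sum (\<beta>'' c) (Dc c) = 1" if c: "c \<in> C" for c
      unfolding \<beta>''_def using a'pos[OF c] by (simp add: sum_divide_distrib[symmetric] \<alpha>'_def)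
    have feas'': "feasU C Dc \<alpha>' \<beta>''"
      unfolding feasU_def using sa b''nn sb'' a'pos by (auto simp: less_imp_le)
    have "V < \<alpha>' c * R c d (\<beta>'' c (dst c)) (\<beta>'' c d)" if c: "c \<in> C" and d: "d \<in> U c" for c d
    proof -
      have dD: "d \<in> Dc c" and dne: "d \<noteq> dst c" using Udef c d by auto
      have w'nn: "0 \<le> w' c e" if "e \<in> Dc c" for e using w'pos[OF c that] dpos by linarith
      have eq: "\<alpha>' c * R c d (\<beta>'' c (dst c)) (\<beta>'' c d) = R c d (w' c (dst c)) (w' c d)"
      proof -
        have "R c d (\<alpha>' c * \<beta>'' c (dst c)) (\<alpha>' c * \<beta>'' c d) = \<alpha>' c * R c d (\<beta>'' c (dst c)) (\<beta>'' c d)"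
          using Rhom[rule_format, OF c d a'pos[OF c] b''nn[OF c dstin[rule_format, OF c]] b''nn[OF c dD]] .
        moreover have "\<alpha>' c * \<beta>'' c e = w' c e" for e unfolding \<beta>''_def using a'pos[OF c] by simp
        ultimately show ?thesis by simp
      qed
      show ?thesis
      proof (cases "c = c0 \<and> d = d0")
        case True
        then have "w' c (dst c) = x0 + \<delta>" "w' c d = (y0 - \<epsilon>) + \<delta>"
          unfolding w'_def using wx0 wy0 d0ne by auto
        moreover have "R c0 d0 x0 (y0 - \<epsilon>) \<le> R c0 d0 (x0 + \<delta>) ((y0 - \<epsilon>) + \<delta>)"
          using Rmono[rule_format, OF c0 d0, of x0 "x0 + \<delta>" "y0 - \<epsilon>" "(y0 - \<epsilon>) + \<delta>"] x0nn eps dpos by simp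
        moreover have "R c0 d0 x0 y0 \<le> R c0 d0 x0 (y0 - \<epsilon>) + L * (y0 - (y0 - \<epsilon>))"
          using L(2)[rule_format, of x0 "y0 - \<epsilon>" y0] x0nn eps by auto
        ultimately show ?thesis using eq True Leps gap_def by auto
      next
        case False
        then have "w' c (dst c) = w c (dst c) + \<delta>" "w' c d = w c d + \<delta>"
          unfolding w'_def using dne d0ne by auto
        moreover have "R c d (w c (dst c)) (w c d) + R c d \<delta> \<delta> \<le> R c d (w c (dst c) + \<delta>) (w c d + \<delta>)"
          using Rsup[rule_format, OF c d, of "w c (dst c)" "w c d" \<delta> \<delta>] wnn[OF c dstin[rule_format, OF c]] wnn[OF c dD] dpos by simp
        moreover have "0 < R c d \<delta> \<delta>" using Rpos[rule_format, OF c d dpos dpos] .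
        moreover have "V \<le> R c d (w c (dst c)) (w c d)" using Rw[OF c d] geV[OF c d] by simp
        ultimately show ?thesis using eq by auto
      qed
    qed
    then have "V < objU C U dst R \<alpha>' \<beta>''" using finC finU by (intro objU_gt) auto
    moreover have "objU C U dst R \<alpha>' \<beta>'' \<le> objU C U dst R \<alpha>s \<beta>s"
      using optu feas'' unfolding optU_def by auto
    ultimately show False using usV by linarith
  qed
qed



lemma coord_subseq:
  fixes X :: "nat \<Rightarrow> 'd \<Rightarrow> real"
  assumes "finite I" "\<forall>n. \<forall>i\<in>I. X n i \<in> {a..b}"
  shows "\<exists>r l. strict_mono r \<and> (\<forall>i\<in>I. (\<lambda>n. X (r n) i) \<longlonglongrightarrow> l i)"
  using assms
proof (induction I rule: finite_induct)
  case empty then show ?case by (intro exI[of _ id]) (auto simp: strict_mono_def)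
next
  case (insert j I)
  have P: "\<forall>n. \<forall>i\<in>I. X n i \<in> {a..b}" using insert.prems by simp
  obtain r l where r: "strict_mono r" "\<forall>i\<in>I. (\<lambda>n. X (r n) i) \<longlonglongrightarrow> l i"
    using insert.IH[OF P] by blast
  have sc: "seq_compact {a..b}" by (rule compact_imp_seq_compact) (rule compact_Icc)
  have mem: "\<forall>n. X (r n) j \<in> {a..b}" using insert.prems by simp
  obtain lj r2 where r2: "lj \<in> {a..b}" "strict_mono r2" "((\<lambda>n. X (r n) j) \<circ> r2) \<longlonglongrightarrow> lj"
    by (rule seq_compactE[OF sc mem])
  have "(\<lambda>n. X ((r \<circ> r2) n) i) \<longlonglongrightarrow> (l(j := lj)) i" if "i \<in> insert j I" for i
  proof (cases "i = j")
    case True then show ?thesis using r2 by (simp add: o_def)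
  next
    case False
    then have "i \<in> I" using that by auto
    then have "((\<lambda>n. X (r n) i) \<circ> r2) \<longlonglongrightarrow> l i" using r r2 by (intro LIMSEQ_subseq_LIMSEQ) auto
    then show ?thesis using False by (simp add: o_def)
  qed
  moreover have "strict_mono (r \<circ> r2)" using r r2 by (intro strict_mono_o)
  ultimately show ?case by (intro exI[where x="r \<circ> r2"] exI[where x="l(j := lj)"]) blast
qed

lemma equalize:
  fixes g :: "'d \<Rightarrow> real \<Rightarrow> real"
  assumes fin: "finite I" and ne: "I \<noteq> {}" and s: "0 < s"
    and g0: "\<forall>i\<in>I. g i 0 = 0"
    and gmono: "\<forall>i\<in>I. \<forall>y y'. 0 \<le> y \<longrightarrow> y \<le> y' \<longrightarrow> g i y \<le> g i y'"
    and gconc: "\<forall>i\<in>I. \<forall>a b t. 0 \<le> a \<longrightarrow> 0 \<le> b \<longrightarrow> 0 \<le> t \<longrightarrow> t \<le> 1 \<longrightarrow>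
        (1-t) * g i a + t * g i b \<le> g i ((1-t) * a + t * b)"
    and gcont: "\<forall>i\<in>I. continuous_on {0..} (g i)"
    and gpos: "\<forall>i\<in>I. \<forall>y>0. 0 < g i y"
  shows "\<exists>\<beta> m. (\<forall>i\<in>I. 0 \<le> \<beta> i) \<and> sum \<beta> I = s \<and> 0 < m \<and> (\<forall>i\<in>I. g i (\<beta> i) = m)"
proof -
  define \<Delta> where "\<Delta> = {\<beta>. (\<forall>i\<in>I. 0 \<le> \<beta> i) \<and> sum \<beta> I = s}"
  define \<Phi> where "\<Phi> \<beta> = Min ((\<lambda>i. g i (\<beta> i)) ` I)" for \<beta>
  have \<Phi>le: "\<Phi> \<beta> \<le> g i (\<beta> i)" if "i \<in> I" for \<beta> i
    unfolding \<Phi>_def using fin that by (intro Min_le) auto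
  have \<Phi>ex: "\<exists>i\<in>I. \<Phi> \<beta> = g i (\<beta> i)" for \<beta>
  proof -
    have "\<Phi> \<beta> \<in> (\<lambda>i. g i (\<beta> i)) ` I" unfolding \<Phi>_def using fin ne by (intro Min_in) auto
    then show ?thesis by auto
  qed
  have le_s: "\<beta> i \<le> s" if "\<beta> \<in> \<Delta>" "i \<in> I" for \<beta> i
  proof -
    have "\<beta> i \<le> sum \<beta> I" using that fin unfolding \<Delta>_def by (intro member_le_sum) auto
    then show ?thesis using that unfolding \<Delta>_def by auto
  qed
  obtain i0 where i0: "i0 \<in> I" using ne ex_in_conv by metis
  define u where "u = (\<lambda>i::'d. s / card I)"
  have cardpos: "0 < card I" using fin ne by (simp add: card_gt_0_iff)
  have u\<Delta>: "u \<in> \<Delta>" unfolding \<Delta>_def u_def using s cardpos by auto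
  have bdd: "bdd_above (\<Phi> ` \<Delta>)"
  proof (rule bdd_aboveI2)
    fix \<beta> assume "\<beta> \<in> \<Delta>"
    have b0: "0 \<le> \<beta> i0" using \<open>\<beta> \<in> \<Delta>\<close> i0 unfolding \<Delta>_def by blast
    have "\<Phi> \<beta> \<le> g i0 (\<beta> i0)" using \<Phi>le[OF i0] .
    moreover have "g i0 (\<beta> i0) \<le> g i0 s"
      using gmono[rule_format, OF i0 b0 le_s[OF \<open>\<beta> \<in> \<Delta>\<close> i0]] .
    ultimately show "\<Phi> \<beta> \<le> g i0 s" by linarith
  qed
  define V where "V = Sup (\<Phi> ` \<Delta>)"
  have "\<exists>\<beta>\<in>\<Delta>. V - 1 / real (Suc n) < \<Phi> \<beta>" for n
  proof -
    have "V - 1 / real (Suc n) < Sup (\<Phi> ` \<Delta>)" unfolding V_def by simp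
    moreover have "\<Phi> ` \<Delta> \<noteq> {}" using u\<Delta> by auto
    ultimately have "\<exists>x\<in>\<Phi> ` \<Delta>. V - 1 / real (Suc n) < x" using less_cSup_iff[of "\<Phi> ` \<Delta>"] bdd by simp
    then show ?thesis by auto
  qed
  then have "\<forall>n. \<exists>\<beta>. \<beta> \<in> \<Delta> \<and> V - 1 / real (Suc n) < \<Phi> \<beta>" by blast
  from choice[OF this] obtain X where X: "\<forall>n. X n \<in> \<Delta> \<and> V - 1 / real (Suc n) < \<Phi> (X n)" by blast
  have "\<forall>n. \<forall>i\<in>I. X n i \<in> {0..s}" using X le_s unfolding \<Delta>_def by auto
  then obtain r l where r: "strict_mono r" "\<forall>i\<in>I. (\<lambda>n. X (r n) i) \<longlonglongrightarrow> l i"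
    using coord_subseq[OF fin] by blast
  have lnn: "0 \<le> l i" if "i \<in> I" for i
    using r that X unfolding \<Delta>_def by (intro LIMSEQ_le_const[of "\<lambda>n. X (r n) i"]) auto
  have "(\<lambda>n. \<Sum>i\<in>I. X (r n) i) \<longlonglongrightarrow> (\<Sum>i\<in>I. l i)" using r by (intro tendsto_sum) auto
  moreover have "(\<lambda>n. \<Sum>i\<in>I. X (r n) i) = (\<lambda>n. s)" using X unfolding \<Delta>_def by auto
  ultimately have "(\<lambda>n. s) \<longlonglongrightarrow> (\<Sum>i\<in>I. l i)" by simp
  then have lsum: "sum l I = s" using LIMSEQ_unique tendsto_const by blast
  have l\<Delta>: "l \<in> \<Delta>" unfolding \<Delta>_def using lnn lsum by auto
  have Vle: "V \<le> g i (l i)" if i: "i \<in> I" for i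
  proof (rule LIMSEQ_le)
    show "(\<lambda>n. V - 1 / real (Suc n)) \<longlonglongrightarrow> V"
      using tendsto_diff[OF tendsto_const LIMSEQ_inverse_real_of_nat, of V] by (simp add: divide_inverse)
    show "(\<lambda>n. g i (X (r n) i)) \<longlonglongrightarrow> g i (l i)"
      using i r lnn X le_s unfolding \<Delta>_def
      by (intro continuous_on_tendsto_compose[OF gcont[rule_format, OF i]]) auto
    show "\<exists>N. \<forall>n\<ge>N. V - 1 / real (Suc n) \<le> g i (X (r n) i)"
    proof (intro exI allI impI)
      fix n :: nat
      have "n \<le> r n" using r by (simp add: seq_suble)
      then have "1 / real (Suc (r n)) \<le> 1 / real (Suc n)" by (intro divide_left_mono) auto
      moreover have "V - 1 / real (Suc (r n)) < \<Phi> (X (r n))" using X by blast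
      moreover have "\<Phi> (X (r n)) \<le> g i (X (r n) i)" using \<Phi>le i by blast
      ultimately show "V - 1 / real (Suc n) \<le> g i (X (r n) i)" by linarith
    qed
  qed
  define m where "m = \<Phi> l"
  have max: "\<Phi> \<beta> \<le> m" if "\<beta> \<in> \<Delta>" for \<beta>
  proof -
    have "\<Phi> \<beta> \<le> V" unfolding V_def using bdd that by (intro cSup_upper) auto
    moreover obtain i where "i \<in> I" "\<Phi> l = g i (l i)" using \<Phi>ex[of l] by blast
    ultimately show ?thesis using Vle unfolding m_def by force
  qed
  have mpos: "0 < m"
  proof -
    obtain i where i: "i \<in> I" "\<Phi> u = g i (u i)" using \<Phi>ex[of u] by blast
    moreover have "0 < u i" unfolding u_def using s cardpos by auto
    ultimately have "0 < \<Phi> u" using gpos[rule_format, OF i(1)] by simp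
    then show ?thesis using max u\<Delta> by force
  qed
  have "\<exists>y. 0 \<le> y \<and> y \<le> l i \<and> g i y = m" if i: "i \<in> I" for i
  proof (rule IVT')
    show "g i 0 \<le> m" using g0[rule_format, OF i] mpos by simp
    show "m \<le> g i (l i)" unfolding m_def using \<Phi>le i by blast
    show "0 \<le> l i" using lnn i by blast
    show "continuous_on {0..l i} (g i)"
      using gcont[rule_format, OF i] by (rule continuous_on_subset) auto
  qed
  then have "\<forall>i\<in>I. \<exists>y. 0 \<le> y \<and> y \<le> l i \<and> g i y = m" by blast
  from bchoice[OF this] obtain y where y: "\<forall>i\<in>I. 0 \<le> y i \<and> y i \<le> l i \<and> g i (y i) = m" by blast
  define \<sigma> where "\<sigma> = s - sum y I"
  have "sum y I \<le> sum l I" using y by (intro sum_mono) auto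
  then have \<sigma>nn: "0 \<le> \<sigma>" unfolding \<sigma>_def using lsum by auto
  have "\<exists>j\<in>I. g j (y j + \<sigma>) \<le> m"
  proof (rule ccontr)
    assume "\<not> ?thesis"
    then have gt: "\<forall>j\<in>I. m < g j (y j + \<sigma>)" by auto
    define t where "t = 1 / real (card I)"
    have t: "0 < t" "t \<le> 1" unfolding t_def using cardpos by auto
    define \<beta>' where "\<beta>' i = y i + t * \<sigma>" for i
    have "sum \<beta>' I = sum y I + real (card I) * (t * \<sigma>)" unfolding \<beta>'_def by (simp add: sum.distrib)
    also have "\<dots> = s" unfolding t_def \<sigma>_def using cardpos by simp
    finally have "\<beta>' \<in> \<Delta>" unfolding \<Delta>_def \<beta>'_def using y \<sigma>nn t by auto
    then have "\<Phi> \<beta>' \<le> m" by (rule max)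
    moreover obtain i where i: "i \<in> I" "\<Phi> \<beta>' = g i (\<beta>' i)" using \<Phi>ex[of \<beta>'] by blast
    moreover have "m < g i (\<beta>' i)"
    proof -
      have c1: "(1 - t) * g i (y i) + t * g i (y i + \<sigma>) \<le> g i ((1 - t) * y i + t * (y i + \<sigma>))"
        using gconc[rule_format, OF i(1), of "y i" "y i + \<sigma>" t] i y \<sigma>nn t by simp
      have e1: "(1 - t) * y i + t * (y i + \<sigma>) = \<beta>' i" unfolding \<beta>'_def by (simp add: algebra_simps)
      have m1: "m < (1 - t) * g i (y i) + t * g i (y i + \<sigma>)"
      proof -
        have "t * m < t * g i (y i + \<sigma>)" using gt i t by auto
        then show ?thesis using y i by (simp add: algebra_simps)
      qed
      show ?thesis using c1 m1 unfolding e1 by linarith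
    qed
    ultimately show False by linarith
  qed
  then obtain j where j: "j \<in> I" "g j (y j + \<sigma>) \<le> m" by blast
  define \<beta> where "\<beta> i = y i + (if i = j then \<sigma> else 0)" for i
  have "sum \<beta> I = sum y I + \<sigma>" unfolding \<beta>_def using fin j by (simp add: sum.distrib)
  then have "sum \<beta> I = s" unfolding \<sigma>_def by simp
  moreover have "\<forall>i\<in>I. 0 \<le> \<beta> i" unfolding \<beta>_def using y \<sigma>nn by auto
  moreover have "\<forall>i\<in>I. g i (\<beta> i) = m"
  proof
    fix i assume i: "i \<in> I"
    show "g i (\<beta> i) = m"
    proof (cases "i = j")
      case True
      have "g j (y j) \<le> g j (y j + \<sigma>)" using gmono[rule_format, OF j(1), of "y j" "y j + \<sigma>"] j y \<sigma>nn by simp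
      then show ?thesis using True j y unfolding \<beta>_def by auto
    next
      case False then show ?thesis using y i unfolding \<beta>_def by auto
    qed
  qed
  ultimately show ?thesis using mpos by (intro exI[where x=\<beta>] exI[where x=m]) blast
qed

lemma rate_min:
  fixes \<Theta> :: "(real \<times> 'h::topological_space) set"
  assumes cpt: "compact \<Theta>" and Acont: "continuous_on \<Theta> (Dv (\<theta>s d))"
    and Bcont: "continuous_on \<Theta> (Dv (\<theta>s dst))" and b: "\<theta>s dst \<in> \<Theta>"
  shows "\<exists>t1 t2. t1 \<in> \<Theta> \<and> t2 \<in> \<Theta> \<and> fst t2 \<le> fst t1 \<and>
           rateG Dv \<Theta> \<theta>s d dst x y = y * Dv (\<theta>s d) t1 + x * Dv (\<theta>s dst) t2 \<and>
           (\<forall>s1 s2. s1 \<in> \<Theta> \<longrightarrow> s2 \<in> \<Theta> \<longrightarrow> fst s2 \<le> fst s1 \<longrightarrow>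
               rateG Dv \<Theta> \<theta>s d dst x y \<le> y * Dv (\<theta>s d) s1 + x * Dv (\<theta>s dst) s2)"
proof -
  define A where "A = Dv (\<theta>s d)"
  define B where "B = Dv (\<theta>s dst)"
  define K where "K = (\<Theta> \<times> \<Theta>) \<inter> {p. fst (snd p) \<le> fst (fst p)}"
  define f where "f p = y * A (fst p) + x * B (snd p)" for p
  have "closed {p :: (real \<times> 'h) \<times> (real \<times> 'h). fst (snd p) \<le> fst (fst p)}"
    by (intro closed_Collect_le continuous_intros)
  then have cK: "compact K" unfolding K_def using cpt by (intro compact_Int_closed compact_Times) auto
  have neK: "K \<noteq> {}" unfolding K_def using b by auto
  have cA: "continuous_on K (\<lambda>p. A (fst p))"
    using Acont unfolding A_def
    by (rule continuous_on_compose2[OF _ continuous_on_fst[OF continuous_on_id]]) (auto simp: K_def)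
  have cB: "continuous_on K (\<lambda>p. B (snd p))"
    using Bcont unfolding B_def
    by (rule continuous_on_compose2[OF _ continuous_on_snd[OF continuous_on_id]]) (auto simp: K_def)
  have "continuous_on K f" unfolding f_def
    by (intro continuous_on_add continuous_on_mult continuous_on_const cA cB)
  then obtain p0 where p0: "p0 \<in> K" "\<forall>q\<in>K. f p0 \<le> f q"
    using continuous_attains_inf[OF cK neK] by blast
  have eq: "rateG Dv \<Theta> \<theta>s d dst x y = f p0"
    unfolding rateG_def
  proof (rule cInf_eq_minimum)
    show "f p0 \<in> {y * Dv (\<theta>s d) t1 + x * Dv (\<theta>s dst) t2 |t1 t2. t1 \<in> \<Theta> \<and> t2 \<in> \<Theta> \<and> fst t2 \<le> fst t1}"
    proof -
      obtain t1 t2 where p: "p0 = (t1, t2)" by (cases p0)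
      then have "t1 \<in> \<Theta>" "t2 \<in> \<Theta>" "fst t2 \<le> fst t1" "f p0 = y * Dv (\<theta>s d) t1 + x * Dv (\<theta>s dst) t2"
        using p0 unfolding K_def f_def A_def B_def by auto
      then show ?thesis by blast
    qed
    fix u assume "u \<in> {y * Dv (\<theta>s d) t1 + x * Dv (\<theta>s dst) t2 |t1 t2. t1 \<in> \<Theta> \<and> t2 \<in> \<Theta> \<and> fst t2 \<le> fst t1}"
    then obtain t1 t2 where "t1 \<in> \<Theta>" "t2 \<in> \<Theta>" "fst t2 \<le> fst t1" "u = y * A t1 + x * B t2"
      unfolding A_def B_def by blast
    then show "f p0 \<le> u" using p0(2)[rule_format, of "(t1, t2)"] unfolding K_def f_def by auto
  qed
  have allle: "\<forall>s1 s2. s1 \<in> \<Theta> \<longrightarrow> s2 \<in> \<Theta> \<longrightarrow> fst s2 \<le> fst s1 \<longrightarrow> f p0 \<le> y * Dv (\<theta>s d) s1 + x * Dv (\<theta>s dst) s2"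
  proof (intro allI impI)
    fix s1 s2 assume "s1 \<in> \<Theta>" "s2 \<in> \<Theta>" "fst s2 \<le> fst s1"
    then show "f p0 \<le> y * Dv (\<theta>s d) s1 + x * Dv (\<theta>s dst) s2" using p0(2)[rule_format, of "(s1, s2)"] unfolding K_def f_def A_def B_def by auto
  qed
  obtain t1 t2 where p: "p0 = (t1, t2)" by (cases p0)
  have "t1 \<in> \<Theta>" "t2 \<in> \<Theta>" "fst t2 \<le> fst t1" using p0(1) p unfolding K_def by auto
  moreover have "f p0 = y * Dv (\<theta>s d) t1 + x * Dv (\<theta>s dst) t2" using p unfolding f_def A_def B_def by simp
  ultimately show ?thesis using eq allle by metis
qed

lemma rate_props:
  fixes \<Theta> :: "(real \<times> 'h::topological_space) set"
  assumes cpt: "compact \<Theta>" and Acont: "continuous_on \<Theta> (Dv (\<theta>s d))"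
    and Bcont: "continuous_on \<Theta> (Dv (\<theta>s dst))"
    and a: "\<theta>s d \<in> \<Theta>" and b: "\<theta>s dst \<in> \<Theta>"
    and Ann: "\<forall>t\<in>\<Theta>. 0 \<le> Dv (\<theta>s d) t" and Bnn: "\<forall>t\<in>\<Theta>. 0 \<le> Dv (\<theta>s dst) t"
    and Bb: "Dv (\<theta>s dst) (\<theta>s dst) = 0"
    and Az: "\<forall>t\<in>\<Theta>. Dv (\<theta>s d) t = 0 \<longrightarrow> t = \<theta>s d"
    and Bz: "\<forall>t\<in>\<Theta>. Dv (\<theta>s dst) t = 0 \<longrightarrow> t = \<theta>s dst"
    and ab: "fst (\<theta>s d) < fst (\<theta>s dst)"
  shows "\<forall>x y. 0 \<le> x \<longrightarrow> 0 \<le> y \<longrightarrow> 0 \<le> rateG Dv \<Theta> \<theta>s d dst x y"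
    and "\<forall>x. 0 \<le> x \<longrightarrow> rateG Dv \<Theta> \<theta>s d dst x 0 = 0"
    and "\<forall>x x' y y'. 0 \<le> x \<longrightarrow> x \<le> x' \<longrightarrow> 0 \<le> y \<longrightarrow> y \<le> y'
           \<longrightarrow> rateG Dv \<Theta> \<theta>s d dst x y \<le> rateG Dv \<Theta> \<theta>s d dst x' y'"
    and "\<forall>x1 y1 x2 y2. 0 \<le> x1 \<longrightarrow> 0 \<le> y1 \<longrightarrow> 0 \<le> x2 \<longrightarrow> 0 \<le> y2
           \<longrightarrow> rateG Dv \<Theta> \<theta>s d dst x1 y1 + rateG Dv \<Theta> \<theta>s d dst x2 y2
               \<le> rateG Dv \<Theta> \<theta>s d dst (x1 + x2) (y1 + y2)"
    and "\<forall>k x y. 0 < k \<longrightarrow> 0 \<le> x \<longrightarrow> 0 \<le> y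
           \<longrightarrow> rateG Dv \<Theta> \<theta>s d dst (k * x) (k * y) = k * rateG Dv \<Theta> \<theta>s d dst x y"
    and "\<forall>x y. 0 < x \<longrightarrow> 0 < y \<longrightarrow> 0 < rateG Dv \<Theta> \<theta>s d dst x y"
    and "\<exists>L\<ge>0. \<forall>x y y'. 0 \<le> x \<longrightarrow> 0 \<le> y \<longrightarrow> y \<le> y'
           \<longrightarrow> rateG Dv \<Theta> \<theta>s d dst x y' \<le> rateG Dv \<Theta> \<theta>s d dst x y + L * (y' - y)"
    and "\<forall>x a b t. 0 \<le> a \<longrightarrow> 0 \<le> b \<longrightarrow> 0 \<le> t \<longrightarrow> t \<le> 1 \<longrightarrow>
           (1-t) * rateG Dv \<Theta> \<theta>s d dst x a + t * rateG Dv \<Theta> \<theta>s d dst x b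
             \<le> rateG Dv \<Theta> \<theta>s d dst x ((1-t) * a + t * b)"
    and "\<forall>x. 0 \<le> x \<longrightarrow> continuous_on {0..} (rateG Dv \<Theta> \<theta>s d dst x)"
proof -
  define F where "F = rateG Dv \<Theta> \<theta>s d dst"
  define A where "A = Dv (\<theta>s d)"
  define B where "B = Dv (\<theta>s dst)"
  have mn: "\<exists>t1 t2. t1 \<in> \<Theta> \<and> t2 \<in> \<Theta> \<and> fst t2 \<le> fst t1 \<and> F x y = y * A t1 + x * B t2 \<and>
           (\<forall>s1 s2. s1 \<in> \<Theta> \<longrightarrow> s2 \<in> \<Theta> \<longrightarrow> fst s2 \<le> fst s1 \<longrightarrow> F x y \<le> y * A s1 + x * B s2)" for x y
    unfolding F_def A_def B_def by (rule rate_min[where \<Theta>=\<Theta> and Dv=Dv and \<theta>s=\<theta>s and d=d and dst=dst, OF cpt Acont Bcont b])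
  have Fle: "F x y \<le> y * A s1 + x * B s2" if "s1 \<in> \<Theta>" "s2 \<in> \<Theta>" "fst s2 \<le> fst s1" for x y s1 s2
    using mn[of x y] that by blast
  have nn: "0 \<le> F x y" if "0 \<le> x" "0 \<le> y" for x y
  proof -
    obtain t1 t2 where "t1 \<in> \<Theta>" "t2 \<in> \<Theta>" "F x y = y * A t1 + x * B t2" using mn[of x y] by blast
    then show ?thesis using that Ann Bnn unfolding A_def B_def by auto
  qed
  show "\<forall>x y. 0 \<le> x \<longrightarrow> 0 \<le> y \<longrightarrow> 0 \<le> rateG Dv \<Theta> \<theta>s d dst x y" using nn F_def by auto
  have zero: "F x 0 = 0" if "0 \<le> x" for x
  proof -
    have "F x 0 \<le> 0 * A (\<theta>s dst) + x * B (\<theta>s dst)" using Fle[OF b b order.refl] by blast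
    then show ?thesis using nn[OF that order.refl] Bb unfolding B_def by auto
  qed
  show "\<forall>x. 0 \<le> x \<longrightarrow> rateG Dv \<Theta> \<theta>s d dst x 0 = 0" using zero F_def by auto
  have mono: "F x y \<le> F x' y'" if "0 \<le> x" "x \<le> x'" "0 \<le> y" "y \<le> y'" for x x' y y'
  proof -
    obtain t1 t2 where t: "t1 \<in> \<Theta>" "t2 \<in> \<Theta>" "fst t2 \<le> fst t1" "F x' y' = y' * A t1 + x' * B t2"
      using mn[of x' y'] by blast
    have "F x y \<le> y * A t1 + x * B t2" using Fle t by auto
    also have "\<dots> \<le> y' * A t1 + x' * B t2"
      using that Ann Bnn t unfolding A_def B_def by (intro add_mono mult_right_mono) auto
    finally show ?thesis using t by simp
  qed
  show "\<forall>x x' y y'. 0 \<le> x \<longrightarrow> x \<le> x' \<longrightarrow> 0 \<le> y \<longrightarrow> y \<le> y'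
           \<longrightarrow> rateG Dv \<Theta> \<theta>s d dst x y \<le> rateG Dv \<Theta> \<theta>s d dst x' y'" using mono F_def by auto
  have sup: "F x1 y1 + F x2 y2 \<le> F (x1 + x2) (y1 + y2)" for x1 y1 x2 y2
  proof -
    obtain t1 t2 where t: "t1 \<in> \<Theta>" "t2 \<in> \<Theta>" "fst t2 \<le> fst t1" "F (x1 + x2) (y1 + y2) = (y1 + y2) * A t1 + (x1 + x2) * B t2"
      using mn[of "x1 + x2" "y1 + y2"] by blast
    have "F x1 y1 \<le> y1 * A t1 + x1 * B t2" "F x2 y2 \<le> y2 * A t1 + x2 * B t2" using Fle t by auto
    then show ?thesis using t by (simp add: algebra_simps)
  qed
  show "\<forall>x1 y1 x2 y2. 0 \<le> x1 \<longrightarrow> 0 \<le> y1 \<longrightarrow> 0 \<le> x2 \<longrightarrow> 0 \<le> y2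
           \<longrightarrow> rateG Dv \<Theta> \<theta>s d dst x1 y1 + rateG Dv \<Theta> \<theta>s d dst x2 y2
               \<le> rateG Dv \<Theta> \<theta>s d dst (x1 + x2) (y1 + y2)" using sup F_def by auto
  have hom: "F (k * x) (k * y) = k * F x y" if "0 < k" for k x y
  proof -
    obtain t1 t2 where t: "t1 \<in> \<Theta>" "t2 \<in> \<Theta>" "fst t2 \<le> fst t1" "F (k * x) (k * y) = (k * y) * A t1 + (k * x) * B t2"
      using mn[of "k * x" "k * y"] by blast
    obtain s1 s2 where s: "s1 \<in> \<Theta>" "s2 \<in> \<Theta>" "fst s2 \<le> fst s1" "F x y = y * A s1 + x * B s2"
      using mn[of x y] by blast
    have h: "F x y \<le> y * A t1 + x * B t2" using Fle t by auto
    have 1: "k * F x y \<le> F (k * x) (k * y)" using mult_left_mono[OF h less_imp_le[OF that]] t by (simp add: algebra_simps)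
    have "F (k * x) (k * y) \<le> (k * y) * A s1 + (k * x) * B s2" using Fle s by auto
    then have 2: "F (k * x) (k * y) \<le> k * F x y" using s that by (simp add: algebra_simps)
    from 1 2 show ?thesis by simp
  qed
  show "\<forall>k x y. 0 < k \<longrightarrow> 0 \<le> x \<longrightarrow> 0 \<le> y
           \<longrightarrow> rateG Dv \<Theta> \<theta>s d dst (k * x) (k * y) = k * rateG Dv \<Theta> \<theta>s d dst x y" using hom F_def by auto
  have pos: "0 < F x y" if "0 < x" "0 < y" for x y
  proof (rule ccontr)
    assume "\<not> 0 < F x y"
    obtain t1 t2 where t: "t1 \<in> \<Theta>" "t2 \<in> \<Theta>" "fst t2 \<le> fst t1" "F x y = y * A t1 + x * B t2"
      using mn[of x y] by blast
    have "0 \<le> y * A t1" "0 \<le> x * B t2" using t that Ann Bnn unfolding A_def B_def by auto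
    then have "y * A t1 = 0" "x * B t2 = 0" using t \<open>\<not> 0 < F x y\<close> by linarith+
    then have "A t1 = 0" "B t2 = 0" using that by auto
    then have "t1 = \<theta>s d" "t2 = \<theta>s dst" using Az Bz t unfolding A_def B_def by auto
    then show False using t ab by auto
  qed
  show "\<forall>x y. 0 < x \<longrightarrow> 0 < y \<longrightarrow> 0 < rateG Dv \<Theta> \<theta>s d dst x y" using pos F_def by auto
  obtain tm where tm: "tm \<in> \<Theta>" "\<forall>t\<in>\<Theta>. A t \<le> A tm"
    using continuous_attains_sup[OF cpt _ Acont] a unfolding A_def by blast
  define L where "L = A tm"
  have L: "0 \<le> L" unfolding L_def A_def using Ann tm by auto
  have lip: "F x y' \<le> F x y + L * (y' - y)" if "y \<le> y'" for x y y'
  proof -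
    obtain t1 t2 where t: "t1 \<in> \<Theta>" "t2 \<in> \<Theta>" "fst t2 \<le> fst t1" "F x y = y * A t1 + x * B t2"
      using mn[of x y] by blast
    have "F x y' \<le> y' * A t1 + x * B t2" using Fle t by auto
    also have "\<dots> = F x y + (y' - y) * A t1" using t by (simp add: algebra_simps)
    also have "\<dots> \<le> F x y + (y' - y) * L" using tm t that unfolding L_def by (intro add_left_mono mult_left_mono) auto
    finally show ?thesis by (simp add: mult.commute)
  qed
  show "\<exists>L\<ge>0. \<forall>x y y'. 0 \<le> x \<longrightarrow> 0 \<le> y \<longrightarrow> y \<le> y'
           \<longrightarrow> rateG Dv \<Theta> \<theta>s d dst x y' \<le> rateG Dv \<Theta> \<theta>s d dst x y + L * (y' - y)"
    using lip L F_def by auto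
  have conc: "(1-t) * F x a' + t * F x b' \<le> F x ((1-t) * a' + t * b')" if "0 \<le> t" "t \<le> 1" for x a' b' t
  proof -
    obtain t1 t2 where t: "t1 \<in> \<Theta>" "t2 \<in> \<Theta>" "fst t2 \<le> fst t1"
       "F x ((1-t) * a' + t * b') = ((1-t) * a' + t * b') * A t1 + x * B t2"
      using mn[of x "(1-t) * a' + t * b'"] by blast
    have "F x a' \<le> a' * A t1 + x * B t2" "F x b' \<le> b' * A t1 + x * B t2" using Fle t by auto
    then have "(1-t) * F x a' \<le> (1-t) * (a' * A t1 + x * B t2)" "t * F x b' \<le> t * (b' * A t1 + x * B t2)"
      using that by (auto intro: mult_left_mono)
    then show ?thesis using t by (simp add: algebra_simps)
  qed
  show "\<forall>x a b t. 0 \<le> a \<longrightarrow> 0 \<le> b \<longrightarrow> 0 \<le> t \<longrightarrow> t \<le> 1 \<longrightarrow>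
           (1-t) * rateG Dv \<Theta> \<theta>s d dst x a + t * rateG Dv \<Theta> \<theta>s d dst x b
             \<le> rateG Dv \<Theta> \<theta>s d dst x ((1-t) * a + t * b)" using conc F_def by auto
  have cont: "continuous_on {0..} (F x)" if x: "0 \<le> x" for x
  proof (rule lipschitz_on_continuous_on)
    show "lipschitz_on L {0..} (F x)"
    proof (rule lipschitz_onI)
      fix y y' :: real assume "y \<in> {0..}" "y' \<in> {0..}"
      then have "\<bar>F x y - F x y'\<bar> \<le> L * \<bar>y - y'\<bar>"
        using lip[of y y' x] lip[of y' y x] mono[OF x order.refl, of y y'] mono[OF x order.refl, of y' y]
        by (cases "y \<le> y'") (auto simp: abs_if algebra_simps)
      then show "dist (F x y) (F x y') \<le> L * dist y y'" by (simp add: dist_real_def)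
    qed (rule L)
  qed
  show "\<forall>x. 0 \<le> x \<longrightarrow> continuous_on {0..} (rateG Dv \<Theta> \<theta>s d dst x)" using cont F_def by auto
qed

lemma gibbs_pt:
  fixes f g :: real
  assumes "0 \<le> f" "0 \<le> g" "g = 0 \<longrightarrow> f = 0"
  shows "0 \<le> f * ln (f / g) - (f - g)" and "f * ln (f / g) - (f - g) = 0 \<Longrightarrow> f = g"
proof -
  have "0 \<le> f * ln (f / g) - (f - g) \<and> (f * ln (f / g) - (f - g) = 0 \<longrightarrow> f = g)"
  proof (cases "f = 0")
    case True then show ?thesis using assms by auto
  next
    case False
    then have f: "0 < f" using assms by auto
    then have g: "0 < g" using assms by auto
    define r where "r = g / f"
    have r: "0 < r" unfolding r_def using f g by auto
    have "ln (f / g) = - ln r" unfolding r_def using f g by (simp add: ln_div)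
    then have eq: "f * ln (f / g) - (f - g) = f * (r - 1 - ln r)" unfolding r_def using f by (simp add: field_simps)
    have "ln r \<le> r - 1" using r by (rule ln_le_minus_one)
    then have "0 \<le> f * (r - 1 - ln r)" using f by auto
    moreover have "f = g" if "f * (r - 1 - ln r) = 0"
    proof -
      have "ln r = r - 1" using that f by auto
      then have "r = 1" using ln_eq_minus_one r by blast
      then show ?thesis unfolding r_def using f by auto
    qed
    ultimately show ?thesis using eq by auto
  qed
  then show "0 \<le> f * ln (f / g) - (f - g)" and "f * ln (f / g) - (f - g) = 0 \<Longrightarrow> f = g" by auto
qed

lemma KL_props:
  fixes \<nu> :: "'y measure" and p :: "'p \<Rightarrow> 'y \<Rightarrow> real"
  assumes ma: "p a \<in> borel_measurable \<nu>" and mb: "p b \<in> borel_measurable \<nu>"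
    and nna: "\<forall>y\<in>space \<nu>. 0 \<le> p a y" and nnb: "\<forall>y\<in>space \<nu>. 0 \<le> p b y"
    and ia: "integrable \<nu> (p a)" "(\<integral>y. p a y \<partial>\<nu>) = 1"
    and ib: "integrable \<nu> (p b)" "(\<integral>y. p b y \<partial>\<nu>) = 1"
    and ac: "AE y in \<nu>. p b y = 0 \<longrightarrow> p a y = 0"
    and iKL: "integrable \<nu> (\<lambda>y. p a y * ln (p a y / p b y))"
  shows "0 \<le> KL \<nu> p a b" and "KL \<nu> p a b = 0 \<Longrightarrow> AE y in \<nu>. p a y = p b y"
proof -
  define h where "h y = p a y * ln (p a y / p b y) - (p a y - p b y)" for y
  have ih: "integrable \<nu> h" unfolding h_def using iKL ia ib by auto
  have "integral\<^sup>L \<nu> h = KL \<nu> p a b - ((\<integral>y. p a y \<partial>\<nu>) - (\<integral>y. p b y \<partial>\<nu>))"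
    unfolding h_def KL_def using iKL ia ib by (simp add: Bochner_Integration.integral_diff)
  then have ih_eq: "integral\<^sup>L \<nu> h = KL \<nu> p a b" using ia ib by simp
  have pt: "AE y in \<nu>. 0 \<le> h y \<and> (h y = 0 \<longrightarrow> p a y = p b y)"
    using ac
  proof (rule AE_mp)
    show "AE y in \<nu>. (p b y = 0 \<longrightarrow> p a y = 0) \<longrightarrow> 0 \<le> h y \<and> (h y = 0 \<longrightarrow> p a y = p b y)"
    proof (rule AE_I2, intro impI)
      fix y assume y: "y \<in> space \<nu>" "p b y = 0 \<longrightarrow> p a y = 0"
      show "0 \<le> h y \<and> (h y = 0 \<longrightarrow> p a y = p b y)"
        unfolding h_def using gibbs_pt[of "p a y" "p b y"] nna nnb y by auto
    qed
  qed
  have hnn: "AE y in \<nu>. 0 \<le> h y" using pt by (rule AE_mp) (rule AE_I2, auto)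
  show "0 \<le> KL \<nu> p a b" using integral_nonneg_AE[OF hnn] ih_eq by simp
  assume "KL \<nu> p a b = 0"
  then have "AE y in \<nu>. h y = 0" using integral_nonneg_eq_0_iff_AE[OF ih hnn] ih_eq by simp
  then show "AE y in \<nu>. p a y = p b y" using pt by eventually_elim auto
qed


lemma objG_ge:
  assumes "finite C" "C \<noteq> {}" "\<forall>c\<in>C. finite (U c) \<and> U c \<noteq> {}"
    and "\<forall>c\<in>C. \<forall>d\<in>U c. z \<le> \<alpha> c * R c d (\<gamma> c) (\<beta> c d)"
  shows "z \<le> objG C U R \<gamma> \<alpha> \<beta>"
proof -
  have "z \<le> \<alpha> c * Min ((\<lambda>d. R c d (\<gamma> c) (\<beta> c d)) ` U c)" if c: "c \<in> C" for c
  proof -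
    have "Min ((\<lambda>d. R c d (\<gamma> c) (\<beta> c d)) ` U c) \<in> (\<lambda>d. R c d (\<gamma> c) (\<beta> c d)) ` U c"
      using assms c by (intro Min_in) auto
    then obtain d where "d \<in> U c" "Min ((\<lambda>d. R c d (\<gamma> c) (\<beta> c d)) ` U c) = R c d (\<gamma> c) (\<beta> c d)"
      by auto
    then show ?thesis using assms c by auto
  qed
  then have "\<forall>a\<in>(\<lambda>c. \<alpha> c * Min ((\<lambda>d. R c d (\<gamma> c) (\<beta> c d)) ` U c)) ` C. z \<le> a"
    by blast
  moreover have fin: "finite ((\<lambda>c. \<alpha> c * Min ((\<lambda>d. R c d (\<gamma> c) (\<beta> c d)) ` U c)) ` C)"
    using assms(1) by simp
  moreover have ne: "(\<lambda>c. \<alpha> c * Min ((\<lambda>d. R c d (\<gamma> c) (\<beta> c d)) ` U c)) ` C \<noteq> {}"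
    using assms(2) by simp
  ultimately show ?thesis unfolding objG_def using Min_ge_iff[OF fin ne] by blast
qed

lemma best_prop:
  fixes mu :: "'d \<Rightarrow> real"
  assumes "finite S" "S \<noteq> {}"
  shows "best mu S \<in> S \<and> (\<forall>d\<in>S. mu d \<le> mu (best mu S))"
proof -
  have "Max (mu ` S) \<in> mu ` S" using assms by (intro Max_in) auto
  then obtain x where x: "x \<in> S" "mu x = Max (mu ` S)" by auto
  have xm: "\<forall>y\<in>S. mu y \<le> mu x" using x assms by auto
  show ?thesis unfolding best_def
  proof (rule arg_maxI[where P = "\<lambda>d. d \<in> S" and x = x])
    show "x \<in> S" by fact
    fix y assume "y \<in> S" then show "\<not> mu y > mu x" using xm by auto
  next
    fix z assume "z \<in> S" "\<forall>y. y \<in> S \<longrightarrow> \<not> mu y > mu z"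
    then show "z \<in> S \<and> (\<forall>d\<in>S. mu d \<le> mu z)" by auto
  qed
qed

theorem proposition3:
  fixes C :: "'c set"
    and Dc :: "'c \<Rightarrow> 'd set"
    and M :: "real set" and H :: "(real ^ 'k) set"
    and \<theta>s :: "'d \<Rightarrow> real \<times> (real ^ 'k)"
    and \<nu> :: "'y measure"
    and p :: "real \<times> (real ^ 'k) \<Rightarrow> 'y \<Rightarrow> real"
    and \<gamma> :: "'c \<Rightarrow> real"
  defines "\<Theta> \<equiv> M \<times> H"
  defines "dst \<equiv> (\<lambda>c. best (\<lambda>d. fst (\<theta>s d)) (Dc c))"
  defines "U \<equiv> (\<lambda>c. Dc c - {dst c})"
  defines "G \<equiv> (\<lambda>c d x y. rateG (KL \<nu> p) \<Theta> \<theta>s d (dst c) x y)"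
  assumes C_fin: "finite C" and C_ne: "C \<noteq> {}"
    and D_fin: "\<forall>c\<in>C. finite (Dc c)"
    and D_two: "\<forall>c\<in>C. card (Dc c) \<ge> 2"
    and D_disj: "\<forall>c\<in>C. \<forall>c'\<in>C. c \<noteq> c' \<longrightarrow> Dc c \<inter> Dc c' = {}"
    and true_in: "\<forall>c\<in>C. \<forall>d\<in>Dc c. \<theta>s d \<in> \<Theta>"
    and mu_distinct: "inj_on (\<lambda>d. fst (\<theta>s d)) (\<Union>c\<in>C. Dc c)"
    \<comment> \<open>Assumption 1\<close>
    and A1_compact: "compact \<Theta>"
    and A1_boundary: "frontier \<Theta> \<in> null_sets lborel"
    and density_meas: "\<forall>\<theta>\<in>\<Theta>. p \<theta> \<in> borel_measurable \<nu>"
    and density_nonneg: "\<forall>\<theta>\<in>\<Theta>. \<forall>y\<in>space \<nu>. 0 \<le> p \<theta> y"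
    and density_prob: "\<forall>\<theta>\<in>\<Theta>. integrable \<nu> (p \<theta>) \<and> (\<integral>y. p \<theta> y \<partial>\<nu>) = 1"
    and A1_cont: "\<forall>y\<in>space \<nu>. continuous_on \<Theta> (\<lambda>\<theta>. p \<theta> y)"
    and A1_ident: "\<forall>\<theta>\<in>\<Theta>. \<forall>\<theta>'\<in>\<Theta>. \<theta> \<noteq> \<theta>' \<longrightarrow> density \<nu> (p \<theta>) \<noteq> density \<nu> (p \<theta>')"
    and A1_GC: "universal_GC \<nu> {(\<lambda>y. ln (p \<theta> y / p \<theta>' y)) | \<theta> \<theta>'. \<theta> \<in> \<Theta> \<and> \<theta>' \<in> \<Theta>}"
    \<comment> \<open>Assumption 2\<close>
    and A2_finite: "\<forall>c\<in>C. \<forall>d\<in>Dc c. \<forall>\<theta>\<in>\<Theta>.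
        (AE y in \<nu>. p \<theta> y = 0 \<longrightarrow> p (\<theta>s d) y = 0) \<and>
        integrable \<nu> (\<lambda>y. p (\<theta>s d) y * ln (p (\<theta>s d) y / p \<theta> y))"
    and A2_C1: "\<forall>c\<in>C. \<forall>d\<in>Dc c. \<exists>D'.
        (\<forall>\<theta>\<in>\<Theta>. ((\<lambda>\<theta>. KL \<nu> p (\<theta>s d) \<theta>) has_derivative blinfun_apply (D' \<theta>)) (at \<theta> within \<Theta>))
        \<and> continuous_on \<Theta> D'"
    \<comment> \<open>gamma in (0,1)^C\<close>
    and gamma_range: "\<forall>c\<in>C. 0 < \<gamma> c \<and> \<gamma> c < 1"
  shows
    "(\<forall>\<alpha> \<beta>. feasG C U \<gamma> \<alpha> \<beta> \<and>
        (\<exists>z>0. \<forall>c\<in>C. \<forall>d\<in>U c. \<alpha> c * G c d (\<gamma> c) (\<beta> c d) = z)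
        \<longrightarrow> optG C U G \<gamma> \<alpha> \<beta>)
     \<and> (\<exists>\<alpha> \<beta>. optG C U G \<gamma> \<alpha> \<beta> \<and>
        (\<exists>z>0. \<forall>c\<in>C. \<forall>d\<in>U c. \<alpha> c * G c d (\<gamma> c) (\<beta> c d) = z))
     \<and> ((\<exists>\<alpha>s \<beta>s. optU C Dc U dst G \<alpha>s \<beta>s \<and> (\<forall>c\<in>C. \<gamma> c = \<beta>s c (dst c)))
        \<longrightarrow> (\<forall>\<alpha> \<beta>. optG C U G \<gamma> \<alpha> \<beta> \<longrightarrow>
              (\<exists>z>0. \<forall>c\<in>C. \<forall>d\<in>U c. \<alpha> c * G c d (\<gamma> c) (\<beta> c d) = z)))"
  
proof -
  have dstP: "dst c \<in> Dc c \<and> (\<forall>d\<in>Dc c. fst (\<theta>s d) \<le> fst (\<theta>s (dst c)))" if c: "c \<in> C" for c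
  proof -
    have "card (Dc c) \<ge> 2" using D_two c by blast
    then have "Dc c \<noteq> {}" by (cases "Dc c = {}") auto
    then show ?thesis unfolding dst_def using best_prop[of "Dc c" "\<lambda>d. fst (\<theta>s d)"] D_fin c by auto
  qed
  have dstin: "\<forall>c\<in>C. dst c \<in> Dc c" using dstP by blast
  have Udef: "\<forall>c\<in>C. U c = Dc c - {dst c}" by (simp add: U_def)
  have lt: "fst (\<theta>s d) < fst (\<theta>s (dst c))" if c: "c \<in> C" and d: "d \<in> U c" for c d
  proof -
    have dD: "d \<in> Dc c" and dne: "d \<noteq> dst c" using d U_def by auto
    have "fst (\<theta>s d) \<noteq> fst (\<theta>s (dst c))"
      using inj_onD[OF mu_distinct, of d "dst c"] dD dne dstP[OF c] c by blast
    then show ?thesis using dstP[OF c] dD by force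
  qed
  have finU: "\<forall>c\<in>C. finite (U c) \<and> U c \<noteq> {}"
  proof
    fix c assume c: "c \<in> C"
    have "card (U c) = card (Dc c) - 1" unfolding U_def using dstP[OF c] D_fin c by (simp add: card_Diff_singleton)
    then have "card (U c) \<ge> 1" using D_two c by auto
    then show "finite (U c) \<and> U c \<noteq> {}" by (auto simp: card_ge_0_finite)
  qed
  have KLfacts: "0 \<le> KL \<nu> p (\<theta>s d) t \<and> (KL \<nu> p (\<theta>s d) t = 0 \<longrightarrow> t = \<theta>s d)"
    if c: "c \<in> C" and d: "d \<in> Dc c" and t: "t \<in> \<Theta>" for c d t
  proof -
    have th: "\<theta>s d \<in> \<Theta>" using true_in c d by auto
    have h1: "p (\<theta>s d) \<in> borel_measurable \<nu>" "p t \<in> borel_measurable \<nu>" using density_meas th t by auto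
    have h2: "\<forall>y\<in>space \<nu>. 0 \<le> p (\<theta>s d) y" "\<forall>y\<in>space \<nu>. 0 \<le> p t y" using density_nonneg th t by auto
    have h3: "integrable \<nu> (p (\<theta>s d))" "(\<integral>y. p (\<theta>s d) y \<partial>\<nu>) = 1" "integrable \<nu> (p t)" "(\<integral>y. p t y \<partial>\<nu>) = 1"
      using density_prob th t by auto
    have h4: "AE y in \<nu>. p t y = 0 \<longrightarrow> p (\<theta>s d) y = 0"
      "integrable \<nu> (\<lambda>y. p (\<theta>s d) y * ln (p (\<theta>s d) y / p t y))" using A2_finite c d t by auto
    note K = KL_props[OF h1(1) h1(2) h2(1) h2(2) h3(1) h3(2) h3(3) h3(4) h4(1) h4(2)]
    show ?thesis
    proof (intro conjI impI)
      show "0 \<le> KL \<nu> p (\<theta>s d) t" by (rule K(1))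
      assume "KL \<nu> p (\<theta>s d) t = 0"
      then have ae: "AE y in \<nu>. p (\<theta>s d) y = p t y" by (rule K(2))
      have eqd: "density \<nu> (\<lambda>x. ennreal (p (\<theta>s d) x)) = density \<nu> (\<lambda>x. ennreal (p t x))"
        using h1 ae by (intro density_cong) auto
      show "t = \<theta>s d"
      proof (rule ccontr)
        assume "t \<noteq> \<theta>s d"
        then have "density \<nu> (\<lambda>x. ennreal (p t x)) \<noteq> density \<nu> (\<lambda>x. ennreal (p (\<theta>s d) x))"
          by (rule A1_ident[rule_format, OF t th])
        then show False using eqd by simp
      qed
    qed
  qed
  have KLself: "KL \<nu> p a a = 0" for a
  proof -
    have "(\<lambda>y. p a y * ln (p a y / p a y)) = (\<lambda>y. 0)"
    proof
      fix y show "p a y * ln (p a y / p a y) = 0" by (cases "p a y = 0") auto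
    qed
    then show ?thesis unfolding KL_def by simp
  qed
  have KLc: "continuous_on \<Theta> (KL \<nu> p (\<theta>s d))" if c: "c \<in> C" and d: "d \<in> Dc c" for c d
  proof -
    obtain D' where "\<forall>\<theta>\<in>\<Theta>. ((\<lambda>\<theta>. KL \<nu> p (\<theta>s d) \<theta>) has_derivative blinfun_apply (D' \<theta>)) (at \<theta> within \<Theta>)"
      using A2_C1 c d by blast
    then have "\<forall>\<theta>\<in>\<Theta>. continuous (at \<theta> within \<Theta>) (\<lambda>\<theta>. KL \<nu> p (\<theta>s d) \<theta>)"
      using has_derivative_continuous by blast
    then show ?thesis by (simp add: continuous_on_eq_continuous_within)
  qed
  have RP: "(\<forall>x y. 0 \<le> x \<longrightarrow> 0 \<le> y \<longrightarrow> 0 \<le> G c d x y) \<and>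
    (\<forall>x. 0 \<le> x \<longrightarrow> G c d x 0 = 0) \<and>
    (\<forall>x x' y y'. 0 \<le> x \<longrightarrow> x \<le> x' \<longrightarrow> 0 \<le> y \<longrightarrow> y \<le> y' \<longrightarrow> G c d x y \<le> G c d x' y') \<and>
    (\<forall>x1 y1 x2 y2. 0 \<le> x1 \<longrightarrow> 0 \<le> y1 \<longrightarrow> 0 \<le> x2 \<longrightarrow> 0 \<le> y2
           \<longrightarrow> G c d x1 y1 + G c d x2 y2 \<le> G c d (x1 + x2) (y1 + y2)) \<and>
    (\<forall>k x y. 0 < k \<longrightarrow> 0 \<le> x \<longrightarrow> 0 \<le> y \<longrightarrow> G c d (k * x) (k * y) = k * G c d x y) \<and>
    (\<forall>x y. 0 < x \<longrightarrow> 0 < y \<longrightarrow> 0 < G c d x y) \<and>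
    (\<exists>L\<ge>0. \<forall>x y y'. 0 \<le> x \<longrightarrow> 0 \<le> y \<longrightarrow> y \<le> y' \<longrightarrow> G c d x y' \<le> G c d x y + L * (y' - y)) \<and>
    (\<forall>x a b t. 0 \<le> a \<longrightarrow> 0 \<le> b \<longrightarrow> 0 \<le> t \<longrightarrow> t \<le> 1 \<longrightarrow>
           (1-t) * G c d x a + t * G c d x b \<le> G c d x ((1-t) * a + t * b)) \<and>
    (\<forall>x. 0 \<le> x \<longrightarrow> continuous_on {0..} (G c d x))"
    if c: "c \<in> C" and d: "d \<in> U c" for c d
  proof -
    have Geq: "G c d = rateG (KL \<nu> p) \<Theta> \<theta>s d (dst c)" by (simp add: G_def)
    have dD: "d \<in> Dc c" using d U_def by auto
    have dsD: "dst c \<in> Dc c" using dstP c by auto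
    note RPs = rate_props[where Dv = "KL \<nu> p" and \<Theta> = \<Theta> and \<theta>s = \<theta>s and d = d and dst = "dst c",
       OF A1_compact KLc[OF c dD] KLc[OF c dsD] true_in[rule_format, OF c dD] true_in[rule_format, OF c dsD]
          _ _ KLself _ _ lt[OF c d]]
    have "\<forall>t\<in>\<Theta>. 0 \<le> KL \<nu> p (\<theta>s d) t" "\<forall>t\<in>\<Theta>. 0 \<le> KL \<nu> p (\<theta>s (dst c)) t"
      "\<forall>t\<in>\<Theta>. KL \<nu> p (\<theta>s d) t = 0 \<longrightarrow> t = \<theta>s d"
      "\<forall>t\<in>\<Theta>. KL \<nu> p (\<theta>s (dst c)) t = 0 \<longrightarrow> t = \<theta>s (dst c)"
      using KLfacts[OF c dD] KLfacts[OF c dsD] by blast+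
    note RPs = RPs[OF this(1) this(2) this(3) this(4)]
    show ?thesis unfolding Geq by (intro conjI RPs)
  qed
  have gam0: "\<forall>c\<in>C. 0 \<le> \<gamma> c" using gamma_range by (auto simp: less_imp_le)
  have Rnn: "\<forall>c\<in>C. \<forall>d\<in>U c. \<forall>x y. 0 \<le> x \<longrightarrow> 0 \<le> y \<longrightarrow> 0 \<le> G c d x y"
    
    by (intro ballI) (rule RP[THEN conjunct1]; assumption)
  have Rzero: "\<forall>c\<in>C. \<forall>d\<in>U c. \<forall>x. 0 \<le> x \<longrightarrow> G c d x 0 = 0" 
    by (intro ballI) (rule RP[THEN conjunct2, THEN conjunct1]; assumption)
  have Rmono: "\<forall>c\<in>C. \<forall>d\<in>U c. \<forall>x x' y y'. 0 \<le> x \<longrightarrow> x \<le> x' \<longrightarrow> 0 \<le> y \<longrightarrow> y \<le> y'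
                  \<longrightarrow> G c d x y \<le> G c d x' y'" 
    by (intro ballI) (rule RP[THEN conjunct2, THEN conjunct2, THEN conjunct1]; assumption)
  have Rsup: "\<forall>c\<in>C. \<forall>d\<in>U c. \<forall>x1 y1 x2 y2. 0 \<le> x1 \<longrightarrow> 0 \<le> y1 \<longrightarrow> 0 \<le> x2 \<longrightarrow> 0 \<le> y2
                  \<longrightarrow> G c d x1 y1 + G c d x2 y2 \<le> G c d (x1 + x2) (y1 + y2)" 
    by (intro ballI) (rule RP[THEN conjunct2, THEN conjunct2, THEN conjunct2, THEN conjunct1]; assumption)
  have Rhom: "\<forall>c\<in>C. \<forall>d\<in>U c. \<forall>k x y. 0 < k \<longrightarrow> 0 \<le> x \<longrightarrow> 0 \<le> y
                  \<longrightarrow> G c d (k * x) (k * y) = k * G c d x y" 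
    by (intro ballI) (rule RP[THEN conjunct2, THEN conjunct2, THEN conjunct2, THEN conjunct2, THEN conjunct1]; assumption)
  have Rpos: "\<forall>c\<in>C. \<forall>d\<in>U c. \<forall>x y. 0 < x \<longrightarrow> 0 < y \<longrightarrow> 0 < G c d x y" 
    by (intro ballI) (rule RP[THEN conjunct2, THEN conjunct2, THEN conjunct2, THEN conjunct2, THEN conjunct2, THEN conjunct1]; assumption)
  have Rlip: "\<forall>c\<in>C. \<forall>d\<in>U c. \<exists>L\<ge>0. \<forall>x y y'. 0 \<le> x \<longrightarrow> 0 \<le> y \<longrightarrow> y \<le> y'
                  \<longrightarrow> G c d x y' \<le> G c d x y + L * (y' - y)" 
    by (intro ballI) (rule RP[THEN conjunct2, THEN conjunct2, THEN conjunct2, THEN conjunct2, THEN conjunct2, THEN conjunct2, THEN conjunct1]; assumption)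
  have Rconc: "\<forall>c\<in>C. \<forall>d\<in>U c. \<forall>x a b t. 0 \<le> a \<longrightarrow> 0 \<le> b \<longrightarrow> 0 \<le> t \<longrightarrow> t \<le> 1 \<longrightarrow>
           (1-t) * G c d x a + t * G c d x b \<le> G c d x ((1-t) * a + t * b)" 
    by (intro ballI) (rule RP[THEN conjunct2, THEN conjunct2, THEN conjunct2, THEN conjunct2, THEN conjunct2, THEN conjunct2, THEN conjunct2, THEN conjunct1]; assumption)
  have Rcont: "\<forall>c\<in>C. \<forall>d\<in>U c. \<forall>x. 0 \<le> x \<longrightarrow> continuous_on {0..} (G c d x)" 
    by (intro ballI) (rule RP[THEN conjunct2, THEN conjunct2, THEN conjunct2, THEN conjunct2, THEN conjunct2, THEN conjunct2, THEN conjunct2, THEN conjunct2]; assumption)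
  have monoy: "\<forall>c\<in>C. \<forall>d\<in>U c. \<forall>y y'. 0 \<le> y \<longrightarrow> y \<le> y' \<longrightarrow> G c d (\<gamma> c) y \<le> G c d (\<gamma> c) y'"
  proof (intro ballI allI impI)
    fix c d and y y' :: real assume c: "c \<in> C" and d: "d \<in> U c" and y: "0 \<le> y" "y \<le> y'"
    show "G c d (\<gamma> c) y \<le> G c d (\<gamma> c) y'"
      using Rmono[rule_format, OF c d, of "\<gamma> c" "\<gamma> c" y y'] gam0[rule_format, OF c] y by simp
  qed
  have P1: "\<forall>\<alpha> \<beta>. feasG C U \<gamma> \<alpha> \<beta> \<and>
        (\<exists>z>0. \<forall>c\<in>C. \<forall>d\<in>U c. \<alpha> c * G c d (\<gamma> c) (\<beta> c d) = z)
        \<longrightarrow> optG C U G \<gamma> \<alpha> \<beta>"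
  proof (intro allI impI)
    fix \<alpha> \<beta> assume h: "feasG C U \<gamma> \<alpha> \<beta> \<and> (\<exists>z>0. \<forall>c\<in>C. \<forall>d\<in>U c. \<alpha> c * G c d (\<gamma> c) (\<beta> c d) = z)"
    then obtain z where z: "0 < z" "\<forall>c\<in>C. \<forall>d\<in>U c. \<alpha> c * G c d (\<gamma> c) (\<beta> c d) = z" by blast
    show "optG C U G \<gamma> \<alpha> \<beta>" using part_i[where C=C and U=U and R=G and \<gamma>=\<gamma>, OF C_fin C_ne finU monoy _ z(1) z(2)] h by blast
  qed
  have "\<forall>c\<in>C. \<exists>\<beta> m. (\<forall>i\<in>U c. 0 \<le> \<beta> i) \<and> sum \<beta> (U c) = 1 - \<gamma> c \<and> 0 < m \<and>
          (\<forall>i\<in>U c. G c i (\<gamma> c) (\<beta> i) = m)"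
  proof
    fix c assume c: "c \<in> C"
    show "\<exists>\<beta> m. (\<forall>i\<in>U c. 0 \<le> \<beta> i) \<and> sum \<beta> (U c) = 1 - \<gamma> c \<and> 0 < m \<and>
          (\<forall>i\<in>U c. G c i (\<gamma> c) (\<beta> i) = m)"
    proof (rule equalize[where g = "\<lambda>d y. G c d (\<gamma> c) y"])
      show "finite (U c)" "U c \<noteq> {}" using finU c by auto
      show "0 < 1 - \<gamma> c" using gamma_range c by auto
      have gc: "0 \<le> \<gamma> c" "0 < \<gamma> c" using gamma_range c by auto
      show "\<forall>i\<in>U c. G c i (\<gamma> c) 0 = 0"
        using Rzero[rule_format, OF c _ gc(1)] by blast
      show "\<forall>i\<in>U c. \<forall>y y'. 0 \<le> y \<longrightarrow> y \<le> y' \<longrightarrow> G c i (\<gamma> c) y \<le> G c i (\<gamma> c) y'"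
        using monoy[rule_format, OF c] by blast
      show "\<forall>i\<in>U c. \<forall>a b t. 0 \<le> a \<longrightarrow> 0 \<le> b \<longrightarrow> 0 \<le> t \<longrightarrow> t \<le> 1 \<longrightarrow>
        (1-t) * G c i (\<gamma> c) a + t * G c i (\<gamma> c) b \<le> G c i (\<gamma> c) ((1-t) * a + t * b)"
        using Rconc[rule_format, OF c] by blast
      show "\<forall>i\<in>U c. continuous_on {0..} (G c i (\<gamma> c))" using Rcont[rule_format, OF c _ gc(1)] by blast
      show "\<forall>i\<in>U c. \<forall>y>0. 0 < G c i (\<gamma> c) y" using Rpos[rule_format, OF c _ gc(2)] by blast
    qed
  qed
  from bchoice[OF this] obtain B where "\<forall>c\<in>C. \<exists>m. (\<forall>i\<in>U c. 0 \<le> B c i) \<and> sum (B c) (U c) = 1 - \<gamma> c \<and> 0 < m \<and>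
          (\<forall>i\<in>U c. G c i (\<gamma> c) (B c i) = m)" by blast
  from bchoice[OF this] obtain M where BM: "\<forall>c\<in>C. (\<forall>i\<in>U c. 0 \<le> B c i) \<and> sum (B c) (U c) = 1 - \<gamma> c \<and> 0 < M c \<and>
          (\<forall>i\<in>U c. G c i (\<gamma> c) (B c i) = M c)" by blast
  define S where "S = (\<Sum>k\<in>C. 1 / M k)"
  have Spos: "0 < S" unfolding S_def using BM C_fin C_ne by (intro sum_pos) auto
  define A where "A c = (1 / M c) / S" for c
  have feasA: "feasG C U \<gamma> A B"
    unfolding feasG_def
  proof (intro conjI)
    show "\<forall>c\<in>C. 0 \<le> A c" unfolding A_def using BM Spos by auto
    have "sum A C = (\<Sum>c\<in>C. 1 / M c) / S" unfolding A_def by (rule sum_divide_distrib[symmetric])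
    also have "\<dots> = S / S" unfolding S_def by simp
    finally show "sum A C = 1" using Spos by simp
    show "\<forall>c\<in>C. (\<forall>d\<in>U c. 0 \<le> B c d) \<and> sum (B c) (U c) = 1 - \<gamma> c" using BM by auto
  qed
  have eqA: "\<forall>c\<in>C. \<forall>d\<in>U c. A c * G c d (\<gamma> c) (B c d) = 1 / S"
    unfolding A_def using BM by auto
  have zpos: "0 < 1 / S" using Spos by simp
  have optA: "optG C U G \<gamma> A B" by (rule part_i[where C=C and U=U and R=G and \<gamma>=\<gamma>, OF C_fin C_ne finU monoy feasA zpos eqA])
  have P2: "\<exists>\<alpha> \<beta>. optG C U G \<gamma> \<alpha> \<beta> \<and>
        (\<exists>z>0. \<forall>c\<in>C. \<forall>d\<in>U c. \<alpha> c * G c d (\<gamma> c) (\<beta> c d) = z)"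
    using optA eqA zpos by (intro exI[where x=A] exI[where x=B]) blast
  have P3: "(\<exists>\<alpha>s \<beta>s. optU C Dc U dst G \<alpha>s \<beta>s \<and> (\<forall>c\<in>C. \<gamma> c = \<beta>s c (dst c)))
        \<longrightarrow> (\<forall>\<alpha> \<beta>. optG C U G \<gamma> \<alpha> \<beta> \<longrightarrow>
              (\<exists>z>0. \<forall>c\<in>C. \<forall>d\<in>U c. \<alpha> c * G c d (\<gamma> c) (\<beta> c d) = z))"
  proof (intro impI allI)
    assume "\<exists>\<alpha>s \<beta>s. optU C Dc U dst G \<alpha>s \<beta>s \<and> (\<forall>c\<in>C. \<gamma> c = \<beta>s c (dst c))"
    then obtain \<alpha>s \<beta>s where optu: "optU C Dc U dst G \<alpha>s \<beta>s" and gs: "\<forall>c\<in>C. \<gamma> c = \<beta>s c (dst c)" by blast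
    fix \<alpha> \<beta> assume opt: "optG C U G \<gamma> \<alpha> \<beta>"
    have "1 / S \<le> objG C U G \<gamma> A B" using objG_ge[where C=C and U=U and R=G and \<gamma>=\<gamma>, OF C_fin C_ne finU] eqA by simp
    also have "\<dots> \<le> objG C U G \<gamma> \<alpha> \<beta>" using opt feasA unfolding optG_def by blast
    finally have Vpos: "0 < objG C U G \<gamma> \<alpha> \<beta>" using zpos by linarith
    have "\<forall>c\<in>C. \<forall>d\<in>U c. \<alpha> c * G c d (\<gamma> c) (\<beta> c d) = objG C U G \<gamma> \<alpha> \<beta>"
      by (rule part_iii[where C=C and U=U and R=G and \<gamma>=\<gamma> and Dc=Dc and dst=dst, OF C_fin C_ne finU D_fin Udef dstin gam0 Rzero Rmono Rsup Rhom Rpos Rlip optu gs opt Vpos])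
    then show "\<exists>z>0. \<forall>c\<in>C. \<forall>d\<in>U c. \<alpha> c * G c d (\<gamma> c) (\<beta> c d) = z"
      using Vpos by (intro exI[where x="objG C U G \<gamma> \<alpha> \<beta>"]) blast
  qed
  show ?thesis by (rule conjI[OF P1 conjI[OF P2 P3]])
qed

end
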